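(* Let $A$ be a commutative algebra with identity $1_A$ and $\lambda,\kappa\in\mathbf{k}$. Let $\text{Ш}_e(A)=\bigoplus_{n\geq 1}A^{\otimes n}$, let $\diamond$ be the product on $\text{Ш}_e(A)$ and $P_e$ the right-shift operator described below, and $j_A:A\to \text{Ш}_e(A)$ the natural embedding. (1) The triple $(\text{Ш}_e(A),\diamond,P_e)$ is a commutative extended Rota-Baxter algebra of weight $(\lambda,\kappa)$. (2) The quadruple $(\text{Ш}_e(A),\diamond,P_e,j_A)$ is the free commutative extended Rota-Baxter algebra of weight $(\lambda,\kappa)$ on $A$.
   Context: $\mathbf{k}$ is a commutative unitary ring; all algebras, linear maps and tensor products are over $\mathbf{k}$. An extended Rota-Baxter operator of weight $(\lambda,\kappa)$ on an algebra $R$ is a linear map $P:R\to R$ with $P(x)P(y)=P(xP(y))+P(P(x)y)+\lambda P(xy)+\kappa xy$ for all $x,y\in R$; the pair $(R,P)$ is an extended Rota-Baxter algebra, and homomorphisms are algebra homomorphisms commuting with the operators. A free commutative extended Rota-Baxter algebra of weight $(\lambda,\kappa)$ on a commutative algebra $A$ is a commutative extended Rota-Baxter algebra $F_e(A)$ with an algebra homomorphism $j_A:A\to F_e(A)$ such that for every commutative extended Rota-Baxter algebra $(R,P)$ of weight $(\lambda,\kappa)$ and every algebra homomorphism $f:A\to R$ there is a unique extended Rota-Baxter algebra homomorphism $\bar f:F_e(A)\to R$ with $f=\bar f\circ j_A$. Here $\text{Ш}_e(A)=\bigoplus_{n\geq1}A^{\otimes n}$, $P_e(\mathfrak{a})=1_A\otimes\mathfrak{a}$,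 $j_A(a)=a\in A=A^{\otimes 1}$, and for pure tensors $\mathfrak{a}=a_0\otimes\mathfrak{a}'\in A^{\otimes(m+1)}$, $\mathfrak{b}=b_0\otimes\mathfrak{b}'\in A^{\otimes(n+1)}$ ($m,n\ge0$) the product is defined recursively by: $\mathfrak{a}\diamond\mathfrak{b}=a_0b_0$ if $m=n=0$; $=a_0b_0\otimes\mathfrak{b}'$ if $m=0,n\ge1$; $=a_0b_0\otimes\mathfrak{a}'$ if $m\ge1,n=0$; and if $m,n\ge1$, $\mathfrak{a}\diamond\mathfrak{b}=a_0b_0\otimes\big(\mathfrak{a}'\diamond(1_A\otimes\mathfrak{b}')+(1_A\otimes\mathfrak{a}')\diamond\mathfrak{b}'+\lambda(\mathfrak{a}'\diamond\mathfrak{b}')\big)+\kappa\, a_0b_0(\mathfrak{a}'\diamond\mathfrak{b}')$, where $a_0b_0(\cdot)$ multiplies the first tensor factor by $a_0b_0$; extended bilinearly. *)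

theory Defs
  imports "HOL-Algebra.Module"
begin

text \<open>Elements of
  the direct sum of the tensor powers of A (n at least 1) are represented by formal
  K-linear combinations of words a_0 a_1 ... a_n (lists of elements of A, read as pure
  tensors a_0 (x) ... (x) a_n), i.e. lists of (coefficient, word) pairs, taken modulo
  the congruence that generates the free K-module on words and the multilinearity
  relations of the tensor product.\<close>

definition word_ok :: "('k,'a) module \<Rightarrow> 'a list \<Rightarrow> bool" where
  "word_ok A w \<longleftrightarrow> w \<noteq> [] \<and> set w \<subseteq> carrier A"

definition fsum_ok :: "'k ring \<Rightarrow> ('k,'a) module \<Rightarrow> ('k \<times> 'a list) list \<Rightarrow> bool" where
  "fsum_ok K A X \<longleftrightarrow> (\<forall>(c,w)\<in>set X. c \<in> carrier K \<and> word_ok A w)"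

definition fs_smult :: "'k ring \<Rightarrow> 'k \<Rightarrow> ('k \<times> 'a list) list \<Rightarrow> ('k \<times> 'a list) list" where
  "fs_smult K e X = map (\<lambda>(d,w). (e \<otimes>\<^bsub>K\<^esub> d, w)) X"

text \<open>The congruence defining the direct sum of tensor powers of A:
  X ~ Y iff X - Y lies in the submodule generated by the multilinearity relations
  (inside the free K-module on words).\<close>
inductive teq :: "'k ring \<Rightarrow> ('k,'a) module \<Rightarrow> ('k \<times> 'a list) list \<Rightarrow> ('k \<times> 'a list) list \<Rightarrow> bool"
  for K :: "'k ring" and A :: "('k,'a) module" where
  refl: "fsum_ok K A X \<Longrightarrow> teq K A X X"
| sym: "teq K A X Y \<Longrightarrow> teq K A Y X"
| trans: "teq K A X Y \<Longrightarrow> teq K A Y Z \<Longrightarrow> teq K A X Z"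
| app: "teq K A X X' \<Longrightarrow> fsum_ok K A Y \<Longrightarrow> teq K A (X @ Y) (X' @ Y)"
| comm: "fsum_ok K A X \<Longrightarrow> fsum_ok K A Y \<Longrightarrow> teq K A (X @ Y) (Y @ X)"
| scal: "teq K A X Y \<Longrightarrow> e \<in> carrier K \<Longrightarrow> teq K A (fs_smult K e X) (fs_smult K e Y)"
| coeff_add: "c \<in> carrier K \<Longrightarrow> d \<in> carrier K \<Longrightarrow> word_ok A w \<Longrightarrow>
      teq K A [(c,w),(d,w)] [(c \<oplus>\<^bsub>K\<^esub> d, w)]"
| coeff_zero: "word_ok A w \<Longrightarrow> teq K A [(\<zero>\<^bsub>K\<^esub>, w)] []"
| lin_add: "c \<in> carrier K \<Longrightarrow> set u \<subseteq> carrier A \<Longrightarrow> set v \<subseteq> carrier A \<Longrightarrow>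
      a \<in> carrier A \<Longrightarrow> b \<in> carrier A \<Longrightarrow>
      teq K A [(c, u @ (a \<oplus>\<^bsub>A\<^esub> b) # v)] [(c, u @ a # v), (c, u @ b # v)]"
| lin_smult: "c \<in> carrier K \<Longrightarrow> d \<in> carrier K \<Longrightarrow> set u \<subseteq> carrier A \<Longrightarrow>
      set v \<subseteq> carrier A \<Longrightarrow> a \<in> carrier A \<Longrightarrow>
      teq K A [(c, u @ (d \<odot>\<^bsub>A\<^esub> a) # v)] [(c \<otimes>\<^bsub>K\<^esub> d, u @ a # v)]"

definition tcls :: "'k ring \<Rightarrow> ('k,'a) module \<Rightarrow> ('k \<times> 'a list) list \<Rightarrow> ('k \<times> 'a list) list set" where
  "tcls K A X = {Y. teq K A X Y}"

definition trep :: "('k \<times> 'a list) list set \<Rightarrow> ('k \<times> 'a list) list" where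
  "trep S = (SOME X. X \<in> S)"

definition fs_pre :: "'a \<Rightarrow> ('k \<times> 'a list) list \<Rightarrow> ('k \<times> 'a list) list" where
  "fs_pre c X = map (\<lambda>(d,w). (d, c # w)) X"

definition fs_mulfirst :: "('k,'a) module \<Rightarrow> 'a \<Rightarrow> ('k \<times> 'a list) list \<Rightarrow> ('k \<times> 'a list) list" where
  "fs_mulfirst A c X = map (\<lambda>(d,w). (d, (c \<otimes>\<^bsub>A\<^esub> hd w) # tl w)) X"

fun dia :: "'k ring \<Rightarrow> ('k,'a) module \<Rightarrow> 'k \<Rightarrow> 'k \<Rightarrow> 'a list \<Rightarrow> 'a list \<Rightarrow> ('k \<times> 'a list) list" where
  "dia K A l k [] ys = []"
| "dia K A l k xs [] = []"
| "dia K A l k [a] [b] = [(\<one>\<^bsub>K\<^esub>, [a \<otimes>\<^bsub>A\<^esub> b])]"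
| "dia K A l k [a] (b # b1 # bs) = [(\<one>\<^bsub>K\<^esub>, (a \<otimes>\<^bsub>A\<^esub> b) # b1 # bs)]"
| "dia K A l k (a # a1 # as) [b] = [(\<one>\<^bsub>K\<^esub>, (a \<otimes>\<^bsub>A\<^esub> b) # a1 # as)]"
| "dia K A l k (a # a1 # as) (b # b1 # bs) =
     fs_pre (a \<otimes>\<^bsub>A\<^esub> b)
       (dia K A l k (a1 # as) (\<one>\<^bsub>A\<^esub> # b1 # bs)
        @ dia K A l k (\<one>\<^bsub>A\<^esub> # a1 # as) (b1 # bs)
        @ fs_smult K l (dia K A l k (a1 # as) (b1 # bs)))
     @ fs_smult K k (fs_mulfirst A (a \<otimes>\<^bsub>A\<^esub> b) (dia K A l k (a1 # as) (b1 # bs)))"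

definition fs_mult :: "'k ring \<Rightarrow> ('k,'a) module \<Rightarrow> 'k \<Rightarrow> 'k \<Rightarrow>
    ('k \<times> 'a list) list \<Rightarrow> ('k \<times> 'a list) list \<Rightarrow> ('k \<times> 'a list) list" where
  "fs_mult K A l k X Y =
     concat (map (\<lambda>(c,v). concat (map (\<lambda>(d,w). fs_smult K (c \<otimes>\<^bsub>K\<^esub> d) (dia K A l k v w)) Y)) X)"

definition Sha_e :: "'k ring \<Rightarrow> ('k,'a) module \<Rightarrow> 'k \<Rightarrow> 'k \<Rightarrow> ('k, ('k \<times> 'a list) list set) module" where
  "Sha_e K A l k =
    \<lparr> carrier = tcls K A ` {X. fsum_ok K A X},
      mult = (\<lambda>S T. tcls K A (fs_mult K A l k (trep S) (trep T))),
      one = tcls K A [(\<one>\<^bsub>K\<^esub>, [\<one>\<^bsub>A\<^esub>])],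
      zero = tcls K A [],
      add = (\<lambda>S T. tcls K A (trep S @ trep T)),
      smult = (\<lambda>c S. tcls K A (fs_smult K c (trep S))) \<rparr>"

definition P_e :: "'k ring \<Rightarrow> ('k,'a) module \<Rightarrow> ('k \<times> 'a list) list set \<Rightarrow> ('k \<times> 'a list) list set" where
  "P_e K A S = tcls K A (fs_pre \<one>\<^bsub>A\<^esub> (trep S))"

definition j_A :: "'k ring \<Rightarrow> ('k,'a) module \<Rightarrow> 'a \<Rightarrow> ('k \<times> 'a list) list set" where
  "j_A K A a = tcls K A [(\<one>\<^bsub>K\<^esub>, [a])]"

definition ext_RB_operator :: "'k ring \<Rightarrow> ('k,'r) module \<Rightarrow> 'k \<Rightarrow> 'k \<Rightarrow> ('r \<Rightarrow> 'r) \<Rightarrow> bool" where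
  "ext_RB_operator K R l k P \<longleftrightarrow>
     P \<in> carrier R \<rightarrow> carrier R \<and>
     (\<forall>x\<in>carrier R. \<forall>y\<in>carrier R. P (x \<oplus>\<^bsub>R\<^esub> y) = P x \<oplus>\<^bsub>R\<^esub> P y) \<and>
     (\<forall>c\<in>carrier K. \<forall>x\<in>carrier R. P (c \<odot>\<^bsub>R\<^esub> x) = c \<odot>\<^bsub>R\<^esub> P x) \<and>
     (\<forall>x\<in>carrier R. \<forall>y\<in>carrier R.
        P x \<otimes>\<^bsub>R\<^esub> P y =
          P (x \<otimes>\<^bsub>R\<^esub> P y) \<oplus>\<^bsub>R\<^esub> P (P x \<otimes>\<^bsub>R\<^esub> y)
          \<oplus>\<^bsub>R\<^esub> l \<odot>\<^bsub>R\<^esub> P (x \<otimes>\<^bsub>R\<^esub> y) \<oplus>\<^bsub>R\<^esub> k \<odot>\<^bsub>R\<^esub> (x \<otimes>\<^bsub>R\<^esub> y))"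

definition comm_ext_RB_algebra :: "'k ring \<Rightarrow> ('k,'r) module \<Rightarrow> 'k \<Rightarrow> 'k \<Rightarrow> ('r \<Rightarrow> 'r) \<Rightarrow> bool" where
  "comm_ext_RB_algebra K R l k P \<longleftrightarrow> algebra K R \<and> ext_RB_operator K R l k P"

definition alg_hom :: "'k ring \<Rightarrow> ('k,'a) module \<Rightarrow> ('k,'b) module \<Rightarrow> ('a \<Rightarrow> 'b) set" where
  "alg_hom K A B = {f \<in> ring_hom A B. \<forall>c\<in>carrier K. \<forall>x\<in>carrier A. f (c \<odot>\<^bsub>A\<^esub> x) = c \<odot>\<^bsub>B\<^esub> f x}"

definition ext_RB_hom :: "'k ring \<Rightarrow> ('k,'a) module \<Rightarrow> ('a \<Rightarrow> 'a) \<Rightarrow> ('k,'b) module \<Rightarrow> ('b \<Rightarrow> 'b) \<Rightarrow> ('a \<Rightarrow> 'b) set" where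
  "ext_RB_hom K R P S Q = {f \<in> alg_hom K R S. \<forall>x\<in>carrier R. f (P x) = Q (f x)}"

end

theory Submission
  imports Defs "HOL-Library.Multiset"
begin

locale sha = algebra K A for K :: "'k ring" and A :: "('k,'a) module" +
  fixes l k :: 'k
  assumes l_in: "l \<in> carrier K" and k_in: "k \<in> carrier K"
begin

abbreviation fok where "fok X \<equiv> fsum_ok K A X"
abbreviation teqq (infix "\<approx>" 50) where "X \<approx> Y \<equiv> teq K A X Y"

lemma fok_Nil[simp]: "fok []" by (simp add: fsum_ok_def)
lemma fok_append[simp]: "fok (X @ Y) \<longleftrightarrow> fok X \<and> fok Y"
  by (auto simp: fsum_ok_def)
lemma fok_Cons[simp]: "fok ((c,w) # X) \<longleftrightarrow> c \<in> carrier K \<and> word_ok A w \<and> fok X"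
  by (auto simp: fsum_ok_def)
lemma fok_concat[simp]: "fok (concat Xs) \<longleftrightarrow> (\<forall>X\<in>set Xs. fok X)"
  by (auto simp: fsum_ok_def)
lemma fokD: "fok X \<Longrightarrow> (c,w) \<in> set X \<Longrightarrow> c \<in> carrier K \<and> word_ok A w"
  by (auto simp: fsum_ok_def)

lemma teq_ok: "X \<approx> Y \<Longrightarrow> fok X \<and> fok Y"
proof (induction rule: teq.induct)
  case (scal X Y e) thus ?case by (auto simp: fsum_ok_def fs_smult_def)
next
  case (coeff_add c d w) thus ?case by (auto simp: fsum_ok_def)
next
  case (lin_add c u v a b) thus ?case by (auto simp: fsum_ok_def word_ok_def)
next
  case (lin_smult c d u v a) thus ?case by (auto simp: fsum_ok_def word_ok_def)
qed (auto simp: fsum_ok_def)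

lemma teq_okL: "X \<approx> Y \<Longrightarrow> fok X" using teq_ok by blast
lemma teq_okR: "X \<approx> Y \<Longrightarrow> fok Y" using teq_ok by blast

lemmas trefl = teq.refl[of K A]
lemmas tsym = teq.sym[of K A]
lemmas ttrans = teq.trans[of K A]
declare teq.trans[trans]

lemma tapp: "X \<approx> X' \<Longrightarrow> Y \<approx> Y' \<Longrightarrow> X @ Y \<approx> X' @ Y'"
proof -
  assume a: "X \<approx> X'" "Y \<approx> Y'"
  have "X @ Y \<approx> X' @ Y" using a teq.app teq_okL by blast
  also have "X' @ Y \<approx> Y @ X'" using a teq.comm teq_ok by blast
  also have "Y @ X' \<approx> Y' @ X'" using a teq.app teq_ok by blast
  also have "Y' @ X' \<approx> X' @ Y'" using a teq.comm teq_ok by blast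
  finally show ?thesis .
qed

lemma tcons: "[x] \<approx> [x'] \<Longrightarrow> Y \<approx> Y' \<Longrightarrow> x # Y \<approx> x' # Y'"
  using tapp[of "[x]" "[x']" Y Y'] by simp

lemma tperm: "mset X = mset Y \<Longrightarrow> fok X \<Longrightarrow> X \<approx> Y"
proof (induction X arbitrary: Y)
  case Nil thus ?case by (simp add: trefl)
next
  case (Cons x X)
  then have "x \<in> set Y" by (metis list.set_intros(1) set_mset_mset)
  then obtain Y1 Y2 where Y: "Y = Y1 @ x # Y2" by (meson split_list)
  have ok: "fok [x]" "fok X" using Cons.prems(2) by (auto simp: fsum_ok_def)
  have "mset X = mset (Y1 @ Y2)" using Cons.prems(1) Y by simp
  then have "X \<approx> Y1 @ Y2" using Cons.IH ok by blast
  then have "[x] @ X \<approx> [x] @ (Y1 @ Y2)" using tapp trefl ok by blast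
  also have "[x] @ (Y1 @ Y2) = ([x] @ Y1) @ Y2" by simp
  also have "... \<approx> (Y1 @ [x]) @ Y2"
  proof -
    have o: "fok Y1" "fok Y2" using teq_okR[OF \<open>X \<approx> Y1 @ Y2\<close>] by auto
    have "[x] @ Y1 \<approx> Y1 @ [x]" using teq.comm[of K A "[x]" Y1] ok o by auto
    thus ?thesis using tapp trefl o by blast
  qed
  finally show ?case using Y by simp
qed

lemma teq_cong_mset: "X \<approx> Y \<Longrightarrow> mset X = mset X' \<Longrightarrow> mset Y = mset Y' \<Longrightarrow> X' \<approx> Y'"
  by (metis teq_ok tperm tsym ttrans fsum_ok_def mset_eq_setD)

lemma tconcat: "list_all2 (\<approx>) Xs Ys \<Longrightarrow> concat Xs \<approx> concat Ys"
  by (induction rule: list_all2_induct) (auto intro: tapp trefl)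

lemma tconcat_map: "(\<And>x. x \<in> set xs \<Longrightarrow> f x \<approx> g x) \<Longrightarrow> concat (map f xs) \<approx> concat (map g xs)"
  by (rule tconcat) (simp add: list_all2_conv_all_nth)

end

context sha
begin

lemma word_okD: "word_ok A w \<Longrightarrow> w \<noteq> [] \<and> set w \<subseteq> carrier A" by (simp add: word_ok_def)
lemma word_ok_Cons[simp]: "word_ok A (a # w) \<longleftrightarrow> a \<in> carrier A \<and> set w \<subseteq> carrier A"
  by (simp add: word_ok_def)

lemma sm_append[simp]: "fs_smult K e (X @ Y) = fs_smult K e X @ fs_smult K e Y"
  by (simp add: fs_smult_def)
lemma sm_Nil[simp]: "fs_smult K e [] = []" by (simp add: fs_smult_def)
lemma sm_Cons[simp]: "fs_smult K e ((c,w) # X) = (e \<otimes>\<^bsub>K\<^esub> c, w) # fs_smult K e X"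
  by (simp add: fs_smult_def)
lemma sm_concat: "fs_smult K e (concat Xs) = concat (map (fs_smult K e) Xs)"
  by (induction Xs) auto
lemma sm_ok[simp]: "e \<in> carrier K \<Longrightarrow> fok X \<Longrightarrow> fok (fs_smult K e X)"
  by (auto simp: fsum_ok_def fs_smult_def)
lemma sm_sm: "e \<in> carrier K \<Longrightarrow> e' \<in> carrier K \<Longrightarrow> fok X \<Longrightarrow>
    fs_smult K e (fs_smult K e' X) = fs_smult K (e \<otimes>\<^bsub>K\<^esub> e') X"
  by (induction X) (auto simp: R.m_assoc)
lemma sm_one: "fok X \<Longrightarrow> fs_smult K \<one>\<^bsub>K\<^esub> X = X"
  by (induction X) auto
lemma sm_cong: "X \<approx> Y \<Longrightarrow> e \<in> carrier K \<Longrightarrow> fs_smult K e X \<approx> fs_smult K e Y"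
  by (rule teq.scal)

lemma sm_add: "e \<in> carrier K \<Longrightarrow> e' \<in> carrier K \<Longrightarrow> fok X \<Longrightarrow>
   fs_smult K (e \<oplus>\<^bsub>K\<^esub> e') X \<approx> fs_smult K e X @ fs_smult K e' X"
proof (induction X)
  case Nil thus ?case by (simp add: trefl)
next
  case (Cons x X)
  obtain c w where x: "x = (c,w)" by force
  have cw: "c \<in> carrier K" "word_ok A w" and X: "fok X" using Cons.prems x by auto
  have "[((e \<oplus>\<^bsub>K\<^esub> e') \<otimes>\<^bsub>K\<^esub> c, w)] \<approx> [(e \<otimes>\<^bsub>K\<^esub> c, w), (e' \<otimes>\<^bsub>K\<^esub> c, w)]"
    using tsym[OF teq.coeff_add[of "e \<otimes>\<^bsub>K\<^esub> c" K "e' \<otimes>\<^bsub>K\<^esub> c" A w]] Cons.prems cw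
    by (auto simp: R.l_distr)
  then have "[((e \<oplus>\<^bsub>K\<^esub> e') \<otimes>\<^bsub>K\<^esub> c, w)] @ fs_smult K (e \<oplus>\<^bsub>K\<^esub> e') X \<approx>
      [(e \<otimes>\<^bsub>K\<^esub> c, w), (e' \<otimes>\<^bsub>K\<^esub> c, w)] @ (fs_smult K e X @ fs_smult K e' X)"
    using tapp Cons X by blast
  also have "... \<approx> ((e \<otimes>\<^bsub>K\<^esub> c, w) # fs_smult K e X) @ ((e' \<otimes>\<^bsub>K\<^esub> c, w) # fs_smult K e' X)"
    by (rule tperm) (use Cons.prems cw X in auto)
  finally show ?case using x by simp
qed

lemma sm_zero: "fok X \<Longrightarrow> fs_smult K \<zero>\<^bsub>K\<^esub> X \<approx> []"
proof (induction X)
  case Nil thus ?case by (simp add: trefl)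
next
  case (Cons x X)
  obtain c w where x: "x = (c,w)" by force
  have cw: "c \<in> carrier K" "word_ok A w" and X: "fok X" using Cons.prems x by auto
  have "[(\<zero>\<^bsub>K\<^esub>, w)] @ fs_smult K \<zero>\<^bsub>K\<^esub> X \<approx> [] @ []"
    using tapp teq.coeff_zero[OF cw(2)] Cons X by blast
  thus ?case using x cw by simp
qed

lemma sm_neg: "fok X \<Longrightarrow> X @ fs_smult K (\<ominus>\<^bsub>K\<^esub> \<one>\<^bsub>K\<^esub>) X \<approx> []"
proof -
  assume X: "fok X"
  have "X @ fs_smult K (\<ominus>\<^bsub>K\<^esub> \<one>\<^bsub>K\<^esub>) X = fs_smult K \<one>\<^bsub>K\<^esub> X @ fs_smult K (\<ominus>\<^bsub>K\<^esub> \<one>\<^bsub>K\<^esub>) X"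
    using sm_one X by simp
  also have "... \<approx> fs_smult K (\<one>\<^bsub>K\<^esub> \<oplus>\<^bsub>K\<^esub> \<ominus>\<^bsub>K\<^esub> \<one>\<^bsub>K\<^esub>) X"
    by (rule tsym, rule sm_add) (use X in auto)
  also have "... = fs_smult K \<zero>\<^bsub>K\<^esub> X" by (simp add: R.r_neg)
  also have "... \<approx> []" using sm_zero X .
  finally show ?thesis .
qed

lemma pre_append[simp]: "fs_pre c (X @ Y) = fs_pre c X @ fs_pre c Y"
  by (simp add: fs_pre_def)
lemma pre_Nil[simp]: "fs_pre c [] = []" by (simp add: fs_pre_def)
lemma pre_Cons[simp]: "fs_pre c ((d,w) # X) = (d, c # w) # fs_pre c X"
  by (simp add: fs_pre_def)
lemma pre_sm: "fs_pre c (fs_smult K e X) = fs_smult K e (fs_pre c X)"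
  by (induction X) auto
lemma pre_ok[simp]: "c \<in> carrier A \<Longrightarrow> fok X \<Longrightarrow> fok (fs_pre c X)"
  by (induction X) (auto simp: word_ok_def)

lemma pre_cong: "X \<approx> Y \<Longrightarrow> c \<in> carrier A \<Longrightarrow> fs_pre c X \<approx> fs_pre c Y"
proof (induction rule: teq.induct)
  case (refl X) thus ?case by (simp add: trefl)
next
  case (sym X Y) thus ?case by (simp add: tsym)
next
  case (trans X Y Z) thus ?case by (meson ttrans)
next
  case (app X X' Y) thus ?case by (simp add: tapp trefl)
next
  case (comm X Y) thus ?case by (simp add: teq.comm)
next
  case (scal X Y e) thus ?case by (simp add: pre_sm teq.scal)
next
  case (coeff_add c' d w) thus ?case using teq.coeff_add[of c' K d A "c # w"] by (simp add: word_ok_def)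
next
  case (coeff_zero w) thus ?case using teq.coeff_zero[of A "c # w" K] by (simp add: word_ok_def)
next
  case (lin_add d u v a b) thus ?case using teq.lin_add[of d K "c # u" A v a b] by simp
next
  case (lin_smult d e u v a) thus ?case using teq.lin_smult[of d K e "c # u" A v a] by simp
qed

lemma pre_add: "a \<in> carrier A \<Longrightarrow> b \<in> carrier A \<Longrightarrow> fok X \<Longrightarrow>
   fs_pre (a \<oplus>\<^bsub>A\<^esub> b) X \<approx> fs_pre a X @ fs_pre b X"
proof (induction X)
  case Nil thus ?case by (simp add: trefl)
next
  case (Cons x X)
  obtain c w where x: "x = (c,w)" by force
  have cw: "c \<in> carrier K" "word_ok A w" and X: "fok X" using Cons.prems x by auto
  have "[(c, (a \<oplus>\<^bsub>A\<^esub> b) # w)] \<approx> [(c, a # w), (c, b # w)]"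
    using teq.lin_add[of c K "[]" A w a b] Cons.prems cw by (auto simp: word_ok_def)
  then have "[(c, (a \<oplus>\<^bsub>A\<^esub> b) # w)] @ fs_pre (a \<oplus>\<^bsub>A\<^esub> b) X \<approx>
      [(c, a # w), (c, b # w)] @ (fs_pre a X @ fs_pre b X)"
    using tapp Cons X by blast
  also have "... \<approx> ((c, a # w) # fs_pre a X) @ ((c, b # w) # fs_pre b X)"
    by (rule tperm) (use Cons.prems cw X in \<open>auto simp: word_ok_def\<close>)
  finally show ?case using x by simp
qed

lemma pre_smult: "d \<in> carrier K \<Longrightarrow> a \<in> carrier A \<Longrightarrow> fok X \<Longrightarrow>
   fs_pre (d \<odot>\<^bsub>A\<^esub> a) X \<approx> fs_smult K d (fs_pre a X)"
proof (induction X)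
  case Nil thus ?case by (simp add: trefl)
next
  case (Cons x X)
  obtain c w where x: "x = (c,w)" by force
  have cw: "c \<in> carrier K" "word_ok A w" and X: "fok X" using Cons.prems x by auto
  have "[(c, (d \<odot>\<^bsub>A\<^esub> a) # w)] \<approx> [(d \<otimes>\<^bsub>K\<^esub> c, a # w)]"
    using teq.lin_smult[of c K d "[]" A w a] Cons.prems cw by (auto simp: word_ok_def R.m_comm)
  then have "[(c, (d \<odot>\<^bsub>A\<^esub> a) # w)] @ fs_pre (d \<odot>\<^bsub>A\<^esub> a) X \<approx>
      [(d \<otimes>\<^bsub>K\<^esub> c, a # w)] @ fs_smult K d (fs_pre a X)"
    using tapp Cons X by blast
  thus ?case using x by simp
qed

lemma mf_append[simp]: "fs_mulfirst A c (X @ Y) = fs_mulfirst A c X @ fs_mulfirst A c Y"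
  by (simp add: fs_mulfirst_def)
lemma mf_Nil[simp]: "fs_mulfirst A c [] = []" by (simp add: fs_mulfirst_def)
lemma mf_Cons[simp]: "fs_mulfirst A c ((d,a # w) # X) = (d, (c \<otimes>\<^bsub>A\<^esub> a) # w) # fs_mulfirst A c X"
  by (simp add: fs_mulfirst_def)
lemma mf_sm: "fs_mulfirst A c (fs_smult K e X) = fs_smult K e (fs_mulfirst A c X)"
  by (simp add: fs_mulfirst_def fs_smult_def split_def)
lemma mf_concat: "fs_mulfirst A c (concat Xs) = concat (map (fs_mulfirst A c) Xs)"
  by (induction Xs) auto
lemma mf_ok[simp]: "c \<in> carrier A \<Longrightarrow> fok X \<Longrightarrow> fok (fs_mulfirst A c X)"
proof (induction X)
  case (Cons x X)
  obtain c w where x: "x = (c,w)" by force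
  then obtain w0 w' where "w = w0 # w'" using Cons.prems by (cases w) (auto simp: word_ok_def)
  thus ?case using Cons x by auto
qed simp

lemma mf_mf: "a \<in> carrier A \<Longrightarrow> b \<in> carrier A \<Longrightarrow> fok X \<Longrightarrow>
   fs_mulfirst A a (fs_mulfirst A b X) = fs_mulfirst A (a \<otimes>\<^bsub>A\<^esub> b) X"
proof (induction X)
  case (Cons x X)
  obtain c w where x: "x = (c,w)" by force
  then obtain w0 w' where "w = w0 # w'" using Cons.prems by (cases w) (auto simp: word_ok_def)
  thus ?case using Cons x by (auto simp: m_assoc)
qed simp

lemma mf_one: "fok X \<Longrightarrow> fs_mulfirst A \<one>\<^bsub>A\<^esub> X = X"
proof (induction X)
  case (Cons x X)
  obtain c w where x: "x = (c,w)" by force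
  then obtain w0 w' where "w = w0 # w'" using Cons.prems by (cases w) (auto simp: word_ok_def)
  thus ?case using Cons x by auto
qed simp

lemma mf_pre: "fs_mulfirst A a (fs_pre c X) = fs_pre (a \<otimes>\<^bsub>A\<^esub> c) X"
  by (induction X) auto

lemma mf_cong: "X \<approx> Y \<Longrightarrow> c \<in> carrier A \<Longrightarrow> fs_mulfirst A c X \<approx> fs_mulfirst A c Y"
proof (induction rule: teq.induct)
  case (refl X) thus ?case by (simp add: trefl)
next
  case (sym X Y) thus ?case by (simp add: tsym)
next
  case (trans X Y Z) thus ?case by (meson ttrans)
next
  case (app X X' Y) thus ?case by (simp add: tapp trefl)
next
  case (comm X Y) thus ?case by (simp add: teq.comm)
next
  case (scal X Y e) thus ?case by (simp add: mf_sm teq.scal)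
next
  case (coeff_add c' d w) thus ?case using teq.coeff_add[of c' K d A "(c \<otimes>\<^bsub>A\<^esub> hd w) # tl w"]
    by (cases w) (auto simp: fs_mulfirst_def word_ok_def)
next
  case (coeff_zero w) thus ?case using teq.coeff_zero[of A "(c \<otimes>\<^bsub>A\<^esub> hd w) # tl w" K]
    by (cases w) (auto simp: fs_mulfirst_def word_ok_def)
next
  case (lin_add d u v a b)
  show ?case
  proof (cases u)
    case Nil
    thus ?thesis using teq.lin_add[of d K "[]" A v "c \<otimes>\<^bsub>A\<^esub> a" "c \<otimes>\<^bsub>A\<^esub> b"] lin_add
      by (simp add: fs_mulfirst_def r_distr)
  next
    case (Cons u0 u')
    thus ?thesis using teq.lin_add[of d K "(c \<otimes>\<^bsub>A\<^esub> u0) # u'" A v a b] lin_add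
      by (simp add: fs_mulfirst_def)
  qed
next
  case (lin_smult d e u v a)
  show ?case
  proof (cases u)
    case Nil
    have "c \<otimes>\<^bsub>A\<^esub> (e \<odot>\<^bsub>A\<^esub> a) = e \<odot>\<^bsub>A\<^esub> (c \<otimes>\<^bsub>A\<^esub> a)"
      using lin_smult by (metis m_comm smult_assoc2 smult_closed)
    thus ?thesis using teq.lin_smult[of d K e "[]" A v "c \<otimes>\<^bsub>A\<^esub> a"] lin_smult Nil
      by (simp add: fs_mulfirst_def)
  next
    case (Cons u0 u')
    thus ?thesis using teq.lin_smult[of d K e "(c \<otimes>\<^bsub>A\<^esub> u0) # u'" A v a] lin_smult
      by (simp add: fs_mulfirst_def)
  qed
qed

lemma mf_add: "a \<in> carrier A \<Longrightarrow> b \<in> carrier A \<Longrightarrow> fok X \<Longrightarrow>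
   fs_mulfirst A (a \<oplus>\<^bsub>A\<^esub> b) X \<approx> fs_mulfirst A a X @ fs_mulfirst A b X"
proof (induction X)
  case Nil thus ?case by (simp add: trefl)
next
  case (Cons x X)
  obtain c w where x: "x = (c,w)" by force
  then obtain w0 w' where w: "w = w0 # w'" using Cons.prems by (cases w) (auto simp: word_ok_def)
  have cw: "c \<in> carrier K" "w0 \<in> carrier A" "set w' \<subseteq> carrier A" and X: "fok X" using Cons.prems x w by auto
  have "[(c, ((a \<oplus>\<^bsub>A\<^esub> b) \<otimes>\<^bsub>A\<^esub> w0) # w')] \<approx> [(c, (a \<otimes>\<^bsub>A\<^esub> w0) # w'), (c, (b \<otimes>\<^bsub>A\<^esub> w0) # w')]"
    using teq.lin_add[of c K "[]" A w' "a \<otimes>\<^bsub>A\<^esub> w0" "b \<otimes>\<^bsub>A\<^esub> w0"] Cons.prems cw by (auto simp: l_distr)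
  then have "[(c, ((a \<oplus>\<^bsub>A\<^esub> b) \<otimes>\<^bsub>A\<^esub> w0) # w')] @ fs_mulfirst A (a \<oplus>\<^bsub>A\<^esub> b) X \<approx>
      [(c, (a \<otimes>\<^bsub>A\<^esub> w0) # w'), (c, (b \<otimes>\<^bsub>A\<^esub> w0) # w')] @ (fs_mulfirst A a X @ fs_mulfirst A b X)"
    using tapp Cons X by blast
  also have "... \<approx> ((c, (a \<otimes>\<^bsub>A\<^esub> w0) # w') # fs_mulfirst A a X) @ ((c, (b \<otimes>\<^bsub>A\<^esub> w0) # w') # fs_mulfirst A b X)"
    by (rule tperm) (use Cons.prems cw X in \<open>auto simp: word_ok_def\<close>)
  finally show ?case using x w by simp
qed

lemma mf_smult: "d \<in> carrier K \<Longrightarrow> a \<in> carrier A \<Longrightarrow> fok X \<Longrightarrow>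
   fs_mulfirst A (d \<odot>\<^bsub>A\<^esub> a) X \<approx> fs_smult K d (fs_mulfirst A a X)"
proof (induction X)
  case Nil thus ?case by (simp add: trefl)
next
  case (Cons x X)
  obtain c w where x: "x = (c,w)" by force
  then obtain w0 w' where w: "w = w0 # w'" using Cons.prems by (cases w) (auto simp: word_ok_def)
  have cw: "c \<in> carrier K" "w0 \<in> carrier A" "set w' \<subseteq> carrier A" and X: "fok X" using Cons.prems x w by auto
  have "[(c, ((d \<odot>\<^bsub>A\<^esub> a) \<otimes>\<^bsub>A\<^esub> w0) # w')] \<approx> [(d \<otimes>\<^bsub>K\<^esub> c, (a \<otimes>\<^bsub>A\<^esub> w0) # w')]"
    using teq.lin_smult[of c K d "[]" A w' "a \<otimes>\<^bsub>A\<^esub> w0"] Cons.prems cw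
    by (auto simp: smult_assoc2 R.m_comm)
  then have "[(c, ((d \<odot>\<^bsub>A\<^esub> a) \<otimes>\<^bsub>A\<^esub> w0) # w')] @ fs_mulfirst A (d \<odot>\<^bsub>A\<^esub> a) X \<approx>
      [(d \<otimes>\<^bsub>K\<^esub> c, (a \<otimes>\<^bsub>A\<^esub> w0) # w')] @ fs_smult K d (fs_mulfirst A a X)"
    using tapp Cons X by blast
  thus ?case using x w by simp
qed

end

context sha
begin

abbreviation D where "D v w \<equiv> dia K A l k v w"
abbreviation sm where "sm e X \<equiv> fs_smult K e X"
abbreviation mf where "mf c X \<equiv> fs_mulfirst A c X"

lemma dia_ind:
  assumes "\<And>ys. P [] ys" "\<And>v va. P (v#va) []" "\<And>a b. P [a] [b]"
    "\<And>a b b1 bs. P [a] (b#b1#bs)" "\<And>a a1 as b. P (a#a1#as) [b]"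
    "\<And>a a1 as b b1 bs. P (a1#as) (\<one>\<^bsub>A\<^esub>#b1#bs) \<Longrightarrow> P (\<one>\<^bsub>A\<^esub>#a1#as) (b1#bs) \<Longrightarrow>
        P (a1#as) (b1#bs) \<Longrightarrow> P (a#a1#as) (b#b1#bs)"
  shows "P v w"
proof -
  have "A = A \<longrightarrow> P v w"
    by (rule dia.induct[of "\<lambda>K' A' l' k' v w. A' = A \<longrightarrow> P v w" K A l k v w]) (use assms in auto)
  thus ?thesis by simp
qed

lemma eq_teq_trans[trans]: "X = Y \<Longrightarrow> Y \<approx> Z \<Longrightarrow> X \<approx> Z" by simp
lemma teq_eq_trans[trans]: "X \<approx> Y \<Longrightarrow> Y = Z \<Longrightarrow> X \<approx> Z" by simp

definition drec where
  "drec c X Y Z = fs_pre c (X @ Y @ sm l Z) @ sm k (mf c Z)"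

lemma dia_rec: "xs \<noteq> [] \<Longrightarrow> ys \<noteq> [] \<Longrightarrow>
   D (a # xs) (b # ys) = drec (a \<otimes>\<^bsub>A\<^esub> b) (D xs (\<one>\<^bsub>A\<^esub> # ys)) (D (\<one>\<^bsub>A\<^esub> # xs) ys) (D xs ys)"
  by (cases xs; cases ys) (auto simp: drec_def)

lemma dia_left1: "D [a] (b # ys) = [(\<one>\<^bsub>K\<^esub>, (a \<otimes>\<^bsub>A\<^esub> b) # ys)]"
  by (cases ys) auto
lemma dia_right1: "D (a # xs) [b] = [(\<one>\<^bsub>K\<^esub>, (a \<otimes>\<^bsub>A\<^esub> b) # xs)]"
  by (cases xs) auto

lemma dia_ok: "word_ok A v \<Longrightarrow> word_ok A w \<Longrightarrow> fok (D v w)"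
proof (induction v w rule: dia_ind)
  case (6 a a1 as b b1 bs)
  thus ?case by (simp add: drec_def l_in k_in)
qed (auto simp: word_ok_def)

lemma drec_ok[simp]: "c \<in> carrier A \<Longrightarrow> fok X \<Longrightarrow> fok Y \<Longrightarrow> fok Z \<Longrightarrow> fok (drec c X Y Z)"
  by (simp add: drec_def l_in k_in)

lemma drec_cong: "X \<approx> X' \<Longrightarrow> Y \<approx> Y' \<Longrightarrow> Z \<approx> Z' \<Longrightarrow> c \<in> carrier A \<Longrightarrow> drec c X Y Z \<approx> drec c X' Y' Z'"
  unfolding drec_def
  by (intro tapp pre_cong sm_cong mf_cong) (auto simp: l_in k_in)

lemma drec_swap: "c \<in> carrier A \<Longrightarrow> fok X \<Longrightarrow> fok Y \<Longrightarrow> fok Z \<Longrightarrow> drec c X Y Z \<approx> drec c Y X Z"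
  unfolding drec_def by (rule tperm) (auto simp: l_in k_in)

lemma drec_app: "c \<in> carrier A \<Longrightarrow> fok X \<Longrightarrow> fok Y \<Longrightarrow> fok Z \<Longrightarrow> fok X' \<Longrightarrow> fok Y' \<Longrightarrow> fok Z' \<Longrightarrow>
   drec c (X @ X') (Y @ Y') (Z @ Z') \<approx> drec c X Y Z @ drec c X' Y' Z'"
  unfolding drec_def by (rule tperm) (auto simp: l_in k_in ac_simps)

lemma drec_sm: "c \<in> carrier A \<Longrightarrow> d \<in> carrier K \<Longrightarrow> fok X \<Longrightarrow> fok Y \<Longrightarrow> fok Z \<Longrightarrow>
   drec c (sm d X) (sm d Y) (sm d Z) = sm d (drec c X Y Z)"
  unfolding drec_def by (simp add: pre_sm mf_sm sm_sm l_in k_in R.m_comm)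

lemma dia_mf: "a \<in> carrier A \<Longrightarrow> x0 \<in> carrier A \<Longrightarrow> set x' \<subseteq> carrier A \<Longrightarrow> word_ok A y \<Longrightarrow>
   D ((a \<otimes>\<^bsub>A\<^esub> x0) # x') y = mf a (D (x0 # x') y)"
proof -
  assume as: "a \<in> carrier A" "x0 \<in> carrier A" "set x' \<subseteq> carrier A" "word_ok A y"
  then obtain y0 ys where y: "y = y0 # ys" by (cases y) (auto simp: word_ok_def)
  show ?thesis
  proof (cases "x' = [] \<or> ys = []")
    case True
    thus ?thesis using as y by (auto simp: dia_left1 dia_right1 m_assoc)
  next
    case False
    have ok: "fok (D x' (\<one>\<^bsub>A\<^esub> # ys))" "fok (D (\<one>\<^bsub>A\<^esub> # x') ys)" "fok (D x' ys)"
      using False as y by (auto intro!: dia_ok simp: word_ok_def)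
    show ?thesis using False as y ok
      by (simp add: dia_rec drec_def mf_pre mf_sm mf_mf m_assoc)
  qed
qed

lemma dia_first: "c \<in> carrier A \<Longrightarrow> set v \<subseteq> carrier A \<Longrightarrow> word_ok A w \<Longrightarrow>
   D (c # v) w = mf c (D (\<one>\<^bsub>A\<^esub> # v) w)"
  using dia_mf[of c "\<one>\<^bsub>A\<^esub>" v w] by simp

lemma dia_lin_add: "set u \<subseteq> carrier A \<Longrightarrow> set v \<subseteq> carrier A \<Longrightarrow> a \<in> carrier A \<Longrightarrow> b \<in> carrier A \<Longrightarrow>
   word_ok A w \<Longrightarrow> D (u @ (a \<oplus>\<^bsub>A\<^esub> b) # v) w \<approx> D (u @ a # v) w @ D (u @ b # v) w"
proof (induction "length u + length v + length w" arbitrary: u v w rule: less_induct)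
  case less
  show ?case
  proof (cases u)
    case Nil
    have ok: "fok (D (\<one>\<^bsub>A\<^esub> # v) w)" using less.prems by (auto intro!: dia_ok)
    have e: "D (x # v) w = mf x (D (\<one>\<^bsub>A\<^esub> # v) w)" if "x \<in> carrier A" for x
      using dia_first[of x v w] less.prems that by simp
    show ?thesis using less.prems Nil mf_add[OF _ _ ok, of a b] e[of a] e[of b] e[of "a \<oplus>\<^bsub>A\<^esub> b"] by simp
  next
    case (Cons u0 u')
    obtain w0 ws where w: "w = w0 # ws" using less.prems by (cases w) (auto simp: word_ok_def)
    have u0: "u0 \<in> carrier A" "set u' \<subseteq> carrier A" using less.prems Cons by auto
    have w0: "w0 \<in> carrier A" "set ws \<subseteq> carrier A" using less.prems w by auto
    show ?thesis
    proof (cases "ws = []")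
      case True
      have "[(\<one>\<^bsub>K\<^esub>, ((u0 \<otimes>\<^bsub>A\<^esub> w0) # u') @ (a \<oplus>\<^bsub>A\<^esub> b) # v)] \<approx>
          [(\<one>\<^bsub>K\<^esub>, ((u0 \<otimes>\<^bsub>A\<^esub> w0) # u') @ a # v), (\<one>\<^bsub>K\<^esub>, ((u0 \<otimes>\<^bsub>A\<^esub> w0) # u') @ b # v)]"
        by (rule teq.lin_add) (use less.prems u0 w0 in auto)
      thus ?thesis using Cons w True by (simp add: dia_right1)
    next
      case False
      let ?c = "u0 \<otimes>\<^bsub>A\<^esub> w0"
      have IH1: "D (u' @ (a \<oplus>\<^bsub>A\<^esub> b) # v) (\<one>\<^bsub>A\<^esub> # ws) \<approx> D (u' @ a # v) (\<one>\<^bsub>A\<^esub> # ws) @ D (u' @ b # v) (\<one>\<^bsub>A\<^esub> # ws)"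
        by (rule less.hyps) (use less.prems Cons w u0 w0 in auto)
      have IH2: "D ((\<one>\<^bsub>A\<^esub> # u') @ (a \<oplus>\<^bsub>A\<^esub> b) # v) ws \<approx> D ((\<one>\<^bsub>A\<^esub> # u') @ a # v) ws @ D ((\<one>\<^bsub>A\<^esub> # u') @ b # v) ws"
        by (rule less.hyps) (use less.prems Cons w u0 w0 False in \<open>auto simp: word_ok_def\<close>)
      have IH3: "D (u' @ (a \<oplus>\<^bsub>A\<^esub> b) # v) ws \<approx> D (u' @ a # v) ws @ D (u' @ b # v) ws"
        by (rule less.hyps) (use less.prems Cons w u0 w0 False in \<open>auto simp: word_ok_def\<close>)
      have oks: "fok (D (u' @ x # v) (\<one>\<^bsub>A\<^esub> # ws))" "fok (D (\<one>\<^bsub>A\<^esub> # u' @ x # v) ws)" "fok (D (u' @ x # v) ws)"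
        if "x \<in> carrier A" for x
        using less.prems u0 w0 False that by (auto intro!: dia_ok simp: word_ok_def)
      have "D (u @ (a \<oplus>\<^bsub>A\<^esub> b) # v) w = drec ?c (D (u' @ (a \<oplus>\<^bsub>A\<^esub> b) # v) (\<one>\<^bsub>A\<^esub> # ws))
          (D (\<one>\<^bsub>A\<^esub> # u' @ (a \<oplus>\<^bsub>A\<^esub> b) # v) ws) (D (u' @ (a \<oplus>\<^bsub>A\<^esub> b) # v) ws)"
        using Cons w False by (simp add: dia_rec)
      also have "... \<approx> drec ?c (D (u' @ a # v) (\<one>\<^bsub>A\<^esub> # ws) @ D (u' @ b # v) (\<one>\<^bsub>A\<^esub> # ws))
          (D (\<one>\<^bsub>A\<^esub> # u' @ a # v) ws @ D (\<one>\<^bsub>A\<^esub> # u' @ b # v) ws) (D (u' @ a # v) ws @ D (u' @ b # v) ws)"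
        using IH1 IH2 IH3 u0 w0 by (intro drec_cong) auto
      also have "... \<approx> drec ?c (D (u' @ a # v) (\<one>\<^bsub>A\<^esub> # ws)) (D (\<one>\<^bsub>A\<^esub> # u' @ a # v) ws) (D (u' @ a # v) ws)
          @ drec ?c (D (u' @ b # v) (\<one>\<^bsub>A\<^esub> # ws)) (D (\<one>\<^bsub>A\<^esub> # u' @ b # v) ws) (D (u' @ b # v) ws)"
        using u0 w0 less.prems oks by (intro drec_app) auto
      also have "... = D (u @ a # v) w @ D (u @ b # v) w"
        using Cons w False by (simp add: dia_rec)
      finally show ?thesis .
    qed
  qed
qed

lemma dia_lin_smult: "set u \<subseteq> carrier A \<Longrightarrow> set v \<subseteq> carrier A \<Longrightarrow> a \<in> carrier A \<Longrightarrow> d \<in> carrier K \<Longrightarrow>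
   word_ok A w \<Longrightarrow> D (u @ (d \<odot>\<^bsub>A\<^esub> a) # v) w \<approx> sm d (D (u @ a # v) w)"
proof (induction "length u + length v + length w" arbitrary: u v w rule: less_induct)
  case less
  show ?case
  proof (cases u)
    case Nil
    have ok: "fok (D (\<one>\<^bsub>A\<^esub> # v) w)" using less.prems by (auto intro!: dia_ok)
    have e: "D (x # v) w = mf x (D (\<one>\<^bsub>A\<^esub> # v) w)" if "x \<in> carrier A" for x
      using dia_first[of x v w] less.prems that by simp
    show ?thesis using less.prems Nil mf_smult[OF _ _ ok, of d a] e[of a] e[of "d \<odot>\<^bsub>A\<^esub> a"] by simp
  next
    case (Cons u0 u')
    obtain w0 ws where w: "w = w0 # ws" using less.prems by (cases w) (auto simp: word_ok_def)
    have u0: "u0 \<in> carrier A" "set u' \<subseteq> carrier A" using less.prems Cons by auto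
    have w0: "w0 \<in> carrier A" "set ws \<subseteq> carrier A" using less.prems w by auto
    show ?thesis
    proof (cases "ws = []")
      case True
      have "[(\<one>\<^bsub>K\<^esub>, ((u0 \<otimes>\<^bsub>A\<^esub> w0) # u') @ (d \<odot>\<^bsub>A\<^esub> a) # v)] \<approx>
          [(\<one>\<^bsub>K\<^esub> \<otimes>\<^bsub>K\<^esub> d, ((u0 \<otimes>\<^bsub>A\<^esub> w0) # u') @ a # v)]"
        by (rule teq.lin_smult) (use less.prems u0 w0 in auto)
      thus ?thesis using Cons w True less.prems by (simp add: dia_right1)
    next
      case False
      let ?c = "u0 \<otimes>\<^bsub>A\<^esub> w0"
      have IH1: "D (u' @ (d \<odot>\<^bsub>A\<^esub> a) # v) (\<one>\<^bsub>A\<^esub> # ws) \<approx> sm d (D (u' @ a # v) (\<one>\<^bsub>A\<^esub> # ws))"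
        by (rule less.hyps) (use less.prems Cons w u0 w0 in auto)
      have IH2: "D ((\<one>\<^bsub>A\<^esub> # u') @ (d \<odot>\<^bsub>A\<^esub> a) # v) ws \<approx> sm d (D ((\<one>\<^bsub>A\<^esub> # u') @ a # v) ws)"
        by (rule less.hyps) (use less.prems Cons w u0 w0 False in \<open>auto simp: word_ok_def\<close>)
      have IH3: "D (u' @ (d \<odot>\<^bsub>A\<^esub> a) # v) ws \<approx> sm d (D (u' @ a # v) ws)"
        by (rule less.hyps) (use less.prems Cons w u0 w0 False in \<open>auto simp: word_ok_def\<close>)
      have oks: "fok (D (u' @ a # v) (\<one>\<^bsub>A\<^esub> # ws))" "fok (D (\<one>\<^bsub>A\<^esub> # u' @ a # v) ws)" "fok (D (u' @ a # v) ws)"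
        using less.prems u0 w0 False by (auto intro!: dia_ok simp: word_ok_def)
      have "D (u @ (d \<odot>\<^bsub>A\<^esub> a) # v) w = drec ?c (D (u' @ (d \<odot>\<^bsub>A\<^esub> a) # v) (\<one>\<^bsub>A\<^esub> # ws))
          (D (\<one>\<^bsub>A\<^esub> # u' @ (d \<odot>\<^bsub>A\<^esub> a) # v) ws) (D (u' @ (d \<odot>\<^bsub>A\<^esub> a) # v) ws)"
        using Cons w False by (simp add: dia_rec)
      also have "... \<approx> drec ?c (sm d (D (u' @ a # v) (\<one>\<^bsub>A\<^esub> # ws)))
          (sm d (D (\<one>\<^bsub>A\<^esub> # u' @ a # v) ws)) (sm d (D (u' @ a # v) ws))"
        using IH1 IH2 IH3 u0 w0 by (intro drec_cong) auto
      also have "... = sm d (D (u @ a # v) w)"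
        using Cons w False oks u0 w0 less.prems by (simp add: dia_rec drec_sm)
      finally show ?thesis .
    qed
  qed
qed

lemma dia_comm: "word_ok A v \<Longrightarrow> word_ok A w \<Longrightarrow> D v w \<approx> D w v"
proof (induction v w rule: dia_ind)
  case (1 ys) thus ?case by (simp add: word_ok_def)
next
  case (2 v va) thus ?case by (simp add: word_ok_def)
next
  case (3 a b) thus ?case by (auto simp: m_comm intro: trefl)
next
  case (4 a b b1 bs) thus ?case by (auto simp: m_comm intro: trefl)
next
  case (5 a a1 as b) thus ?case by (auto simp: m_comm intro: trefl)
next
  case (6 a a1 as b b1 bs)
  have ok: "word_ok A (a1 # as)" "word_ok A (b1 # bs)" "word_ok A (\<one>\<^bsub>A\<^esub> # a1 # as)" "word_ok A (\<one>\<^bsub>A\<^esub> # b1 # bs)"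
    "a \<in> carrier A" "b \<in> carrier A" using 6 by auto
  have "D (a # a1 # as) (b # b1 # bs) = drec (a \<otimes>\<^bsub>A\<^esub> b) (D (a1 # as) (\<one>\<^bsub>A\<^esub> # b1 # bs)) (D (\<one>\<^bsub>A\<^esub> # a1 # as) (b1 # bs)) (D (a1 # as) (b1 # bs))"
    by (simp add: drec_def)
  also have "... \<approx> drec (a \<otimes>\<^bsub>A\<^esub> b) (D (\<one>\<^bsub>A\<^esub> # b1 # bs) (a1 # as)) (D (b1 # bs) (\<one>\<^bsub>A\<^esub> # a1 # as)) (D (b1 # bs) (a1 # as))"
    using 6 ok by (intro drec_cong) auto
  also have "... \<approx> drec (a \<otimes>\<^bsub>A\<^esub> b) (D (b1 # bs) (\<one>\<^bsub>A\<^esub> # a1 # as)) (D (\<one>\<^bsub>A\<^esub> # b1 # bs) (a1 # as)) (D (b1 # bs) (a1 # as))"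
    using ok by (intro drec_swap) (auto intro!: dia_ok)
  also have "... = D (b # b1 # bs) (a # a1 # as)"
    using ok by (simp add: drec_def m_comm)
  finally show ?case .
qed

lemma dia_lin_add2: "set u \<subseteq> carrier A \<Longrightarrow> set v \<subseteq> carrier A \<Longrightarrow> a \<in> carrier A \<Longrightarrow> b \<in> carrier A \<Longrightarrow>
   word_ok A w \<Longrightarrow> D w (u @ (a \<oplus>\<^bsub>A\<^esub> b) # v) \<approx> D w (u @ a # v) @ D w (u @ b # v)"
proof -
  assume as: "set u \<subseteq> carrier A" "set v \<subseteq> carrier A" "a \<in> carrier A" "b \<in> carrier A" "word_ok A w"
  have "D w (u @ (a \<oplus>\<^bsub>A\<^esub> b) # v) \<approx> D (u @ (a \<oplus>\<^bsub>A\<^esub> b) # v) w" using as by (intro dia_comm) (auto simp: word_ok_def)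
  also have "... \<approx> D (u @ a # v) w @ D (u @ b # v) w" using as by (intro dia_lin_add)
  also have "... \<approx> D w (u @ a # v) @ D w (u @ b # v)" using as by (intro tapp dia_comm) (auto simp: word_ok_def)
  finally show ?thesis .
qed

end

context sha
begin

abbreviation FM where "FM X Y \<equiv> fs_mult K A l k X Y"

definition row where "row c v Y = concat (map (\<lambda>(d,w). sm (c \<otimes>\<^bsub>K\<^esub> d) (D v w)) Y)"

lemma fm_Nil1[simp]: "FM [] Y = []" by (simp add: fs_mult_def)
lemma fm_Cons1[simp]: "FM ((c,v) # X) Y = row c v Y @ FM X Y" by (simp add: fs_mult_def row_def)
lemma fm_app1[simp]: "FM (X @ X') Y = FM X Y @ FM X' Y" by (simp add: fs_mult_def)
lemma fm_Nil2[simp]: "FM X [] = []" by (induction X) (auto simp: row_def)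
lemma row_Nil[simp]: "row c v [] = []" by (simp add: row_def)
lemma row_Cons[simp]: "row c v ((d,w) # Y) = sm (c \<otimes>\<^bsub>K\<^esub> d) (D v w) @ row c v Y" by (simp add: row_def)

lemma row_ok[simp]: "c \<in> carrier K \<Longrightarrow> word_ok A v \<Longrightarrow> fok Y \<Longrightarrow> fok (row c v Y)"
  by (induction Y) (auto simp: dia_ok)

lemma fm_ok[simp]: "fok X \<Longrightarrow> fok Y \<Longrightarrow> fok (FM X Y)"
  by (induction X) auto

lemma row_sm: "e \<in> carrier K \<Longrightarrow> c \<in> carrier K \<Longrightarrow> word_ok A v \<Longrightarrow> fok Y \<Longrightarrow>
   row (e \<otimes>\<^bsub>K\<^esub> c) v Y = sm e (row c v Y)"
  by (induction Y) (auto simp: sm_sm dia_ok R.m_assoc)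

lemma fm_sm1: "e \<in> carrier K \<Longrightarrow> fok X \<Longrightarrow> fok Y \<Longrightarrow> FM (sm e X) Y = sm e (FM X Y)"
  by (induction X) (auto simp: row_sm)

lemma mset_concat_map_app:
  "mset (concat (map (\<lambda>x. f x @ g x) xs)) = mset (concat (map f xs)) + mset (concat (map g xs))"
  by (induction xs) (auto simp: ac_simps)

lemma mset_concat_swap:
  "mset (concat (map (\<lambda>x. concat (map (F x) ys)) xs)) = mset (concat (map (\<lambda>y. concat (map (\<lambda>x. F x y) xs)) ys))"
proof (induction xs)
  case Nil thus ?case by (induction ys) auto
next
  case (Cons x xs)
  have "mset (concat (map (\<lambda>y. concat (map (\<lambda>x. F x y) (x # xs))) ys)) =
        mset (concat (map (\<lambda>y. F x y @ concat (map (\<lambda>x. F x y) xs)) ys))" by simp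
  also have "... = mset (concat (map (F x) ys)) + mset (concat (map (\<lambda>y. concat (map (\<lambda>x. F x y) xs)) ys))"
    by (rule mset_concat_map_app)
  finally show ?case using Cons by simp
qed

lemma row_add: "c \<in> carrier K \<Longrightarrow> d \<in> carrier K \<Longrightarrow> word_ok A v \<Longrightarrow> fok Y \<Longrightarrow>
   row (c \<oplus>\<^bsub>K\<^esub> d) v Y \<approx> row c v Y @ row d v Y"
proof (induction Y)
  case Nil thus ?case by (simp add: trefl)
next
  case (Cons y Y)
  obtain e w where y: "y = (e,w)" by force
  have ew: "e \<in> carrier K" "word_ok A w" "fok Y" using Cons.prems y by auto
  have "sm ((c \<oplus>\<^bsub>K\<^esub> d) \<otimes>\<^bsub>K\<^esub> e) (D v w) \<approx> sm (c \<otimes>\<^bsub>K\<^esub> e) (D v w) @ sm (d \<otimes>\<^bsub>K\<^esub> e) (D v w)"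
    using sm_add[of "c \<otimes>\<^bsub>K\<^esub> e" "d \<otimes>\<^bsub>K\<^esub> e" "D v w"] Cons.prems ew by (simp add: R.l_distr dia_ok)
  then have "sm ((c \<oplus>\<^bsub>K\<^esub> d) \<otimes>\<^bsub>K\<^esub> e) (D v w) @ row (c \<oplus>\<^bsub>K\<^esub> d) v Y \<approx>
     (sm (c \<otimes>\<^bsub>K\<^esub> e) (D v w) @ sm (d \<otimes>\<^bsub>K\<^esub> e) (D v w)) @ (row c v Y @ row d v Y)"
    using Cons ew by (intro tapp) auto
  also have "... \<approx> (sm (c \<otimes>\<^bsub>K\<^esub> e) (D v w) @ row c v Y) @ (sm (d \<otimes>\<^bsub>K\<^esub> e) (D v w) @ row d v Y)"
    by (rule tperm) (use Cons.prems ew in \<open>auto simp: dia_ok\<close>)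
  finally show ?case using y by simp
qed

lemma row_zero: "word_ok A v \<Longrightarrow> fok Y \<Longrightarrow> row \<zero>\<^bsub>K\<^esub> v Y \<approx> []"
proof (induction Y)
  case Nil thus ?case by (simp add: trefl)
next
  case (Cons y Y)
  obtain e w where y: "y = (e,w)" by force
  have ew: "e \<in> carrier K" "word_ok A w" "fok Y" using Cons.prems y by auto
  have "sm (\<zero>\<^bsub>K\<^esub> \<otimes>\<^bsub>K\<^esub> e) (D v w) @ row \<zero>\<^bsub>K\<^esub> v Y \<approx> [] @ []"
    using sm_zero[of "D v w"] Cons ew by (intro tapp) (auto simp: dia_ok)
  thus ?case using y by simp
qed

lemma row_lin_add: "c \<in> carrier K \<Longrightarrow> set u \<subseteq> carrier A \<Longrightarrow> set v \<subseteq> carrier A \<Longrightarrow>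
   a \<in> carrier A \<Longrightarrow> b \<in> carrier A \<Longrightarrow> fok Y \<Longrightarrow>
   row c (u @ (a \<oplus>\<^bsub>A\<^esub> b) # v) Y \<approx> row c (u @ a # v) Y @ row c (u @ b # v) Y"
proof (induction Y)
  case Nil thus ?case by (simp add: trefl)
next
  case (Cons y Y)
  obtain e w where y: "y = (e,w)" by force
  have ew: "e \<in> carrier K" "word_ok A w" "fok Y" using Cons.prems y by auto
  have okw: "word_ok A (u @ x # v)" if "x \<in> carrier A" for x using Cons.prems that by (auto simp: word_ok_def)
  have "sm (c \<otimes>\<^bsub>K\<^esub> e) (D (u @ (a \<oplus>\<^bsub>A\<^esub> b) # v) w) @ row c (u @ (a \<oplus>\<^bsub>A\<^esub> b) # v) Y \<approx>
     sm (c \<otimes>\<^bsub>K\<^esub> e) (D (u @ a # v) w @ D (u @ b # v) w) @ (row c (u @ a # v) Y @ row c (u @ b # v) Y)"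
    using Cons ew by (intro tapp sm_cong dia_lin_add) auto
  also have "... \<approx> (sm (c \<otimes>\<^bsub>K\<^esub> e) (D (u @ a # v) w) @ row c (u @ a # v) Y) @
                   (sm (c \<otimes>\<^bsub>K\<^esub> e) (D (u @ b # v) w) @ row c (u @ b # v) Y)"
    by (rule tperm) (use Cons.prems ew okw in \<open>auto simp: dia_ok\<close>)
  finally show ?case using y by simp
qed

lemma row_lin_smult: "c \<in> carrier K \<Longrightarrow> set u \<subseteq> carrier A \<Longrightarrow> set v \<subseteq> carrier A \<Longrightarrow>
   a \<in> carrier A \<Longrightarrow> d \<in> carrier K \<Longrightarrow> fok Y \<Longrightarrow>
   row c (u @ (d \<odot>\<^bsub>A\<^esub> a) # v) Y \<approx> row (c \<otimes>\<^bsub>K\<^esub> d) (u @ a # v) Y"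
proof (induction Y)
  case Nil thus ?case by (simp add: trefl)
next
  case (Cons y Y)
  obtain e w where y: "y = (e,w)" by force
  have ew: "e \<in> carrier K" "word_ok A w" "fok Y" using Cons.prems y by auto
  have okw: "word_ok A (u @ a # v)" using Cons.prems by (auto simp: word_ok_def)
  have "sm (c \<otimes>\<^bsub>K\<^esub> e) (D (u @ (d \<odot>\<^bsub>A\<^esub> a) # v) w) @ row c (u @ (d \<odot>\<^bsub>A\<^esub> a) # v) Y \<approx>
     sm (c \<otimes>\<^bsub>K\<^esub> e) (sm d (D (u @ a # v) w)) @ row (c \<otimes>\<^bsub>K\<^esub> d) (u @ a # v) Y"
    using Cons ew by (intro tapp sm_cong dia_lin_smult) auto
  also have "sm (c \<otimes>\<^bsub>K\<^esub> e) (sm d (D (u @ a # v) w)) = sm (c \<otimes>\<^bsub>K\<^esub> d \<otimes>\<^bsub>K\<^esub> e) (D (u @ a # v) w)"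
    using Cons.prems ew okw by (simp add: sm_sm dia_ok R.m_assoc R.m_comm R.m_lcomm)
  finally show ?case using y by simp
qed

lemma fm_cong1: "X \<approx> X' \<Longrightarrow> fok Y \<Longrightarrow> FM X Y \<approx> FM X' Y"
proof (induction rule: teq.induct)
  case (refl X) thus ?case by (simp add: trefl)
next
  case (sym X Y) thus ?case by (simp add: tsym)
next
  case (trans X Y Z) thus ?case by (meson ttrans)
next
  case (app X X' Z) thus ?case by (simp add: tapp trefl)
next
  case (comm X Z) thus ?case by (simp add: teq.comm)
next
  case (scal X Z e) thus ?case using teq_ok[OF scal.hyps(1)] by (simp add: fm_sm1 teq.scal)
next
  case (coeff_add c d w)
  have "row c w Y @ row d w Y \<approx> row (c \<oplus>\<^bsub>K\<^esub> d) w Y"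
    using row_add[of c d w Y] coeff_add by (simp add: tsym)
  thus ?case by simp
next
  case (coeff_zero w) thus ?case using row_zero[of w Y] by simp
next
  case (lin_add c u v a b) thus ?case using row_lin_add[of c u v a b Y] by simp
next
  case (lin_smult c d u v a) thus ?case using row_lin_smult[of c u v a d Y] by simp
qed

lemma fm_comm: "fok X \<Longrightarrow> fok Y \<Longrightarrow> FM X Y \<approx> FM Y X"
proof -
  assume X: "fok X" and Y: "fok Y"
  let ?F = "\<lambda>(c,v) (d,w). sm (c \<otimes>\<^bsub>K\<^esub> d) (D v w)"
  have "FM X Y = concat (map (\<lambda>x. concat (map (?F x) Y)) X)"
    by (simp add: fs_mult_def split_def)
  also have "... \<approx> concat (map (\<lambda>y. concat (map (\<lambda>x. ?F x y) X)) Y)"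
    by (rule tperm) (use X Y in \<open>auto simp: mset_concat_swap[of ?F] dia_ok dest!: fokD\<close>)
  also have "... \<approx> concat (map (\<lambda>y. concat (map (\<lambda>x. ?F y x) X)) Y)"
  proof (intro tconcat_map)
    fix y x assume y: "y \<in> set Y" and x: "x \<in> set X"
    obtain c v where x': "x = (c,v)" by force
    obtain d w where y': "y = (d,w)" by force
    have cv: "c \<in> carrier K" "word_ok A v" using fokD[OF X x[unfolded x']] by auto
    have dw: "d \<in> carrier K" "word_ok A w" using fokD[OF Y y[unfolded y']] by auto
    show "?F x y \<approx> ?F y x" using cv dw x' y' by (simp add: R.m_comm sm_cong dia_comm)
  qed
  also have "... = FM Y X"
    by (simp add: fs_mult_def split_def)
  finally show ?thesis .
qed

lemma fm_cong2: "Y \<approx> Y' \<Longrightarrow> fok X \<Longrightarrow> FM X Y \<approx> FM X Y'"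
proof -
  assume a: "Y \<approx> Y'" "fok X"
  have "FM X Y \<approx> FM Y X" using a teq_ok fm_comm by blast
  also have "... \<approx> FM Y' X" using a fm_cong1 by blast
  also have "... \<approx> FM X Y'" using a teq_ok fm_comm by blast
  finally show ?thesis .
qed

lemma fm_cong: "X \<approx> X' \<Longrightarrow> Y \<approx> Y' \<Longrightarrow> FM X Y \<approx> FM X' Y'"
  by (meson fm_cong1 fm_cong2 teq_ok ttrans)

end

context sha
begin

abbreviation Q where "Q \<equiv> Sha_e K A l k"
abbreviation cls where "cls X \<equiv> tcls K A X"

lemma cls_refl: "fok X \<Longrightarrow> X \<in> cls X" by (simp add: tcls_def trefl)

lemma cls_eqI: "X \<approx> Y \<Longrightarrow> cls X = cls Y"
  unfolding tcls_def by (auto intro: ttrans tsym)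

lemma cls_eq_iff: "fok X \<Longrightarrow> cls X = cls Y \<longleftrightarrow> X \<approx> Y"
proof
  assume "fok X" "cls X = cls Y"
  then have "X \<in> cls Y" using cls_refl by blast
  thus "X \<approx> Y" by (simp add: tcls_def tsym)
qed (rule cls_eqI)

lemma trep_cls: "fok X \<Longrightarrow> trep (cls X) \<approx> X"
proof -
  assume X: "fok X"
  have "trep (cls X) \<in> cls X" unfolding trep_def by (rule someI[of _ X]) (rule cls_refl[OF X])
  thus ?thesis by (simp add: tcls_def tsym)
qed

lemma carrier_Q: "carrier Q = cls ` {X. fok X}" by (simp add: Sha_e_def)
lemma in_Q[simp]: "fok X \<Longrightarrow> cls X \<in> carrier Q" by (simp add: carrier_Q)
lemma QE: assumes "S \<in> carrier Q" obtains X where "fok X" "S = cls X"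
  using assms by (auto simp: carrier_Q)

lemma q_add: "fok X \<Longrightarrow> fok Y \<Longrightarrow> cls X \<oplus>\<^bsub>Q\<^esub> cls Y = cls (X @ Y)"
  by (simp add: Sha_e_def) (intro cls_eqI tapp trep_cls)
lemma q_mult: "fok X \<Longrightarrow> fok Y \<Longrightarrow> cls X \<otimes>\<^bsub>Q\<^esub> cls Y = cls (FM X Y)"
  by (simp add: Sha_e_def) (intro cls_eqI fm_cong trep_cls)
lemma q_smult: "c \<in> carrier K \<Longrightarrow> fok X \<Longrightarrow> c \<odot>\<^bsub>Q\<^esub> cls X = cls (sm c X)"
  by (simp add: Sha_e_def) (intro cls_eqI sm_cong trep_cls)
lemma q_zero: "\<zero>\<^bsub>Q\<^esub> = cls []" by (simp add: Sha_e_def)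
lemma q_one: "\<one>\<^bsub>Q\<^esub> = cls [(\<one>\<^bsub>K\<^esub>, [\<one>\<^bsub>A\<^esub>])]" by (simp add: Sha_e_def)
lemma q_P: "fok X \<Longrightarrow> P_e K A (cls X) = cls (fs_pre \<one>\<^bsub>A\<^esub> X)"
  by (simp add: P_e_def) (intro cls_eqI pre_cong trep_cls, auto)

lemma Q_abelian_group: "abelian_group Q"
proof (rule abelian_groupI)
  fix S T assume "S \<in> carrier Q" "T \<in> carrier Q"
  thus "S \<oplus>\<^bsub>Q\<^esub> T \<in> carrier Q" by (auto elim!: QE simp: q_add)
next
  show "\<zero>\<^bsub>Q\<^esub> \<in> carrier Q" by (simp add: q_zero)
next
  fix S T U assume "S \<in> carrier Q" "T \<in> carrier Q" "U \<in> carrier Q"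
  thus "S \<oplus>\<^bsub>Q\<^esub> T \<oplus>\<^bsub>Q\<^esub> U = S \<oplus>\<^bsub>Q\<^esub> (T \<oplus>\<^bsub>Q\<^esub> U)" by (auto elim!: QE simp: q_add)
next
  fix S T assume "S \<in> carrier Q" "T \<in> carrier Q"
  thus "S \<oplus>\<^bsub>Q\<^esub> T = T \<oplus>\<^bsub>Q\<^esub> S" by (elim QE) (simp add: q_add, rule cls_eqI, rule tperm, auto)
next
  fix S assume "S \<in> carrier Q"
  thus "\<zero>\<^bsub>Q\<^esub> \<oplus>\<^bsub>Q\<^esub> S = S" by (auto elim!: QE simp: q_add q_zero)
next
  fix S assume "S \<in> carrier Q"
  then obtain X where X: "fok X" "S = cls X" by (rule QE)
  have m1: "\<ominus>\<^bsub>K\<^esub> \<one>\<^bsub>K\<^esub> \<in> carrier K" by simp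
  have "cls (sm (\<ominus>\<^bsub>K\<^esub> \<one>\<^bsub>K\<^esub>) X) \<oplus>\<^bsub>Q\<^esub> S = \<zero>\<^bsub>Q\<^esub>"
  proof -
    have "sm (\<ominus>\<^bsub>K\<^esub> \<one>\<^bsub>K\<^esub>) X @ X \<approx> X @ sm (\<ominus>\<^bsub>K\<^esub> \<one>\<^bsub>K\<^esub>) X" by (rule tperm) (use X m1 in auto)
    also have "... \<approx> []" by (rule sm_neg[OF X(1)])
    finally show ?thesis using X m1 by (simp add: q_add q_zero cls_eqI)
  qed
  thus "\<exists>y\<in>carrier Q. y \<oplus>\<^bsub>Q\<^esub> S = \<zero>\<^bsub>Q\<^esub>" using X m1 by (intro bexI[of _ "cls (sm (\<ominus>\<^bsub>K\<^esub> \<one>\<^bsub>K\<^esub>) X)"]) auto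
qed

lemma Q_module: "module K Q"
proof (rule moduleI)
  show "cring K" by (rule R.is_cring)
  show "abelian_group Q" by (rule Q_abelian_group)
next
  fix a S assume "a \<in> carrier K" "S \<in> carrier Q"
  thus "a \<odot>\<^bsub>Q\<^esub> S \<in> carrier Q" by (auto elim!: QE simp: q_smult)
next
  fix a b S assume "a \<in> carrier K" "b \<in> carrier K" "S \<in> carrier Q"
  thus "(a \<oplus>\<^bsub>K\<^esub> b) \<odot>\<^bsub>Q\<^esub> S = a \<odot>\<^bsub>Q\<^esub> S \<oplus>\<^bsub>Q\<^esub> b \<odot>\<^bsub>Q\<^esub> S"
    by (elim QE) (simp add: q_smult q_add, rule cls_eqI, rule sm_add, auto)
next
  fix a S T assume "a \<in> carrier K" "S \<in> carrier Q" "T \<in> carrier Q"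
  thus "a \<odot>\<^bsub>Q\<^esub> (S \<oplus>\<^bsub>Q\<^esub> T) = a \<odot>\<^bsub>Q\<^esub> S \<oplus>\<^bsub>Q\<^esub> a \<odot>\<^bsub>Q\<^esub> T"
    by (auto elim!: QE simp: q_smult q_add)
next
  fix a b S assume "a \<in> carrier K" "b \<in> carrier K" "S \<in> carrier Q"
  thus "(a \<otimes>\<^bsub>K\<^esub> b) \<odot>\<^bsub>Q\<^esub> S = a \<odot>\<^bsub>Q\<^esub> (b \<odot>\<^bsub>Q\<^esub> S)"
    by (auto elim!: QE simp: q_smult sm_sm)
next
  fix S assume "S \<in> carrier Q"
  thus "\<one>\<^bsub>K\<^esub> \<odot>\<^bsub>Q\<^esub> S = S" by (auto elim!: QE simp: q_smult sm_one)
qed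

end

sublocale sha \<subseteq> Qm: module K "Sha_e K A l k"
  by (rule Q_module)


context sha
begin

definition Mq where "Mq a S = cls (mf a (trep S))"
abbreviation Pq where "Pq S \<equiv> P_e K A S"
definition W where "W w = cls [(\<one>\<^bsub>K\<^esub>, w)]"

lemma q_Mq: "a \<in> carrier A \<Longrightarrow> fok X \<Longrightarrow> Mq a (cls X) = cls (mf a X)"
  unfolding Mq_def by (intro cls_eqI mf_cong trep_cls)

lemma W_closed[simp]: "word_ok A w \<Longrightarrow> W w \<in> carrier Q" by (simp add: W_def)
lemma q_mult_closed[simp]: "S \<in> carrier Q \<Longrightarrow> T \<in> carrier Q \<Longrightarrow> S \<otimes>\<^bsub>Q\<^esub> T \<in> carrier Q"
  by (auto elim!: QE simp: q_mult)
lemma Pq_closed[simp]: "S \<in> carrier Q \<Longrightarrow> Pq S \<in> carrier Q"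
  by (auto elim!: QE simp: q_P)
lemma Mq_closed[simp]: "a \<in> carrier A \<Longrightarrow> S \<in> carrier Q \<Longrightarrow> Mq a S \<in> carrier Q"
  by (auto elim!: QE simp: q_Mq)

lemma q_l_distr: "S \<in> carrier Q \<Longrightarrow> T \<in> carrier Q \<Longrightarrow> U \<in> carrier Q \<Longrightarrow>
   (S \<oplus>\<^bsub>Q\<^esub> T) \<otimes>\<^bsub>Q\<^esub> U = S \<otimes>\<^bsub>Q\<^esub> U \<oplus>\<^bsub>Q\<^esub> T \<otimes>\<^bsub>Q\<^esub> U"
  by (auto elim!: QE simp: q_mult q_add)

lemma q_comm: "S \<in> carrier Q \<Longrightarrow> T \<in> carrier Q \<Longrightarrow> S \<otimes>\<^bsub>Q\<^esub> T = T \<otimes>\<^bsub>Q\<^esub> S"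
  by (elim QE) (simp add: q_mult, rule cls_eqI, rule fm_comm, auto)

lemma q_r_distr: "S \<in> carrier Q \<Longrightarrow> T \<in> carrier Q \<Longrightarrow> U \<in> carrier Q \<Longrightarrow>
   U \<otimes>\<^bsub>Q\<^esub> (S \<oplus>\<^bsub>Q\<^esub> T) = U \<otimes>\<^bsub>Q\<^esub> S \<oplus>\<^bsub>Q\<^esub> U \<otimes>\<^bsub>Q\<^esub> T"
  using q_comm[of U "S \<oplus>\<^bsub>Q\<^esub> T"] q_comm[of U S] q_comm[of U T] q_l_distr[of S T U] by simp

lemma q_smult_l: "c \<in> carrier K \<Longrightarrow> S \<in> carrier Q \<Longrightarrow> T \<in> carrier Q \<Longrightarrow>
   (c \<odot>\<^bsub>Q\<^esub> S) \<otimes>\<^bsub>Q\<^esub> T = c \<odot>\<^bsub>Q\<^esub> (S \<otimes>\<^bsub>Q\<^esub> T)"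
  by (auto elim!: QE simp: q_mult q_smult fm_sm1)

lemma q_smult_r: "c \<in> carrier K \<Longrightarrow> S \<in> carrier Q \<Longrightarrow> T \<in> carrier Q \<Longrightarrow>
   T \<otimes>\<^bsub>Q\<^esub> (c \<odot>\<^bsub>Q\<^esub> S) = c \<odot>\<^bsub>Q\<^esub> (T \<otimes>\<^bsub>Q\<^esub> S)"
  using q_comm[of T "c \<odot>\<^bsub>Q\<^esub> S"] q_comm[of T S] q_smult_l[of c S T] by simp

lemma Pq_add: "S \<in> carrier Q \<Longrightarrow> T \<in> carrier Q \<Longrightarrow> Pq (S \<oplus>\<^bsub>Q\<^esub> T) = Pq S \<oplus>\<^bsub>Q\<^esub> Pq T"
  by (auto elim!: QE simp: q_P q_add)
lemma Pq_smult: "c \<in> carrier K \<Longrightarrow> S \<in> carrier Q \<Longrightarrow> Pq (c \<odot>\<^bsub>Q\<^esub> S) = c \<odot>\<^bsub>Q\<^esub> Pq S"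
  by (auto elim!: QE simp: q_P q_smult pre_sm)
lemma Mq_add: "a \<in> carrier A \<Longrightarrow> S \<in> carrier Q \<Longrightarrow> T \<in> carrier Q \<Longrightarrow> Mq a (S \<oplus>\<^bsub>Q\<^esub> T) = Mq a S \<oplus>\<^bsub>Q\<^esub> Mq a T"
  by (auto elim!: QE simp: q_Mq q_add)
lemma Mq_smult: "a \<in> carrier A \<Longrightarrow> c \<in> carrier K \<Longrightarrow> S \<in> carrier Q \<Longrightarrow> Mq a (c \<odot>\<^bsub>Q\<^esub> S) = c \<odot>\<^bsub>Q\<^esub> Mq a S"
  by (auto elim!: QE simp: q_Mq q_smult mf_sm)
lemma Mq_Mq: "a \<in> carrier A \<Longrightarrow> b \<in> carrier A \<Longrightarrow> S \<in> carrier Q \<Longrightarrow> Mq a (Mq b S) = Mq (a \<otimes>\<^bsub>A\<^esub> b) S"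
  by (auto elim!: QE simp: q_Mq mf_mf)
lemma Mq_one: "S \<in> carrier Q \<Longrightarrow> Mq \<one>\<^bsub>A\<^esub> S = S"
  by (auto elim!: QE simp: q_Mq mf_one)

lemma fm_mf1: "a \<in> carrier A \<Longrightarrow> fok X \<Longrightarrow> fok Y \<Longrightarrow> FM (mf a X) Y = mf a (FM X Y)"
proof (induction X)
  case (Cons x X)
  obtain c v where x: "x = (c,v)" by force
  then obtain v0 v' where v: "v = v0 # v'" using Cons.prems by (cases v) (auto simp: word_ok_def)
  have cv: "c \<in> carrier K" "v0 \<in> carrier A" "set v' \<subseteq> carrier A" "fok X" using Cons.prems x v by auto
  have a: "a \<in> carrier A" using Cons.prems by simp
  have "row c ((a \<otimes>\<^bsub>A\<^esub> v0) # v') Y = mf a (row c (v0 # v') Y)"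
    using Cons.prems(3)
  proof (induction Y)
    case (Cons y Y)
    obtain d w where y: "y = (d,w)" by force
    have dw: "d \<in> carrier K" "word_ok A w" "fok Y" using Cons.prems y by auto
    show ?case using Cons.IH dw y cv Cons.prems a dia_mf[of a v0 v' w] by (simp add: mf_sm)
  qed simp
  thus ?case using Cons x v cv by simp
qed simp

lemma Mq_mult_l: "a \<in> carrier A \<Longrightarrow> S \<in> carrier Q \<Longrightarrow> T \<in> carrier Q \<Longrightarrow> Mq a S \<otimes>\<^bsub>Q\<^esub> T = Mq a (S \<otimes>\<^bsub>Q\<^esub> T)"
  by (auto elim!: QE simp: q_Mq q_mult fm_mf1)
lemma Mq_mult_r: "a \<in> carrier A \<Longrightarrow> S \<in> carrier Q \<Longrightarrow> T \<in> carrier Q \<Longrightarrow> S \<otimes>\<^bsub>Q\<^esub> Mq a T = Mq a (S \<otimes>\<^bsub>Q\<^esub> T)"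
  using q_comm[of S "Mq a T"] q_comm[of S T] Mq_mult_l[of a T S] by simp

lemma fm_W1: "a \<in> carrier A \<Longrightarrow> fok X \<Longrightarrow> FM [(\<one>\<^bsub>K\<^esub>, [a])] X = mf a X"
proof (induction X)
  case (Cons x X)
  obtain d w where x: "x = (d,w)" by force
  then obtain w0 w' where w: "w = w0 # w'" using Cons.prems by (cases w) (auto simp: word_ok_def)
  show ?case using Cons x w by (simp add: dia_left1)
qed simp

lemma W1_mult: "a \<in> carrier A \<Longrightarrow> S \<in> carrier Q \<Longrightarrow> W [a] \<otimes>\<^bsub>Q\<^esub> S = Mq a S"
  by (auto elim!: QE simp: W_def q_Mq q_mult fm_W1 simp del: fm_Cons1)

lemma W_cons: "a \<in> carrier A \<Longrightarrow> word_ok A x \<Longrightarrow> W (a # x) = Mq a (Pq (W x))"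
  by (simp add: W_def q_P q_Mq word_ok_def)

lemma W_smult: "c \<in> carrier K \<Longrightarrow> word_ok A w \<Longrightarrow> c \<odot>\<^bsub>Q\<^esub> W w = cls [(c, w)]"
  by (simp add: W_def q_smult)

lemma RB_words: "word_ok A v \<Longrightarrow> word_ok A w \<Longrightarrow>
  Pq (W v) \<otimes>\<^bsub>Q\<^esub> Pq (W w) =
   Pq (W v \<otimes>\<^bsub>Q\<^esub> Pq (W w)) \<oplus>\<^bsub>Q\<^esub> Pq (Pq (W v) \<otimes>\<^bsub>Q\<^esub> W w)
   \<oplus>\<^bsub>Q\<^esub> l \<odot>\<^bsub>Q\<^esub> Pq (W v \<otimes>\<^bsub>Q\<^esub> W w) \<oplus>\<^bsub>Q\<^esub> k \<odot>\<^bsub>Q\<^esub> (W v \<otimes>\<^bsub>Q\<^esub> W w)"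
proof -
  assume v: "word_ok A v" and w: "word_ok A w"
  have ok: "fok (D v (\<one>\<^bsub>A\<^esub> # w))" "fok (D (\<one>\<^bsub>A\<^esub> # v) w)" "fok (D v w)"
    using v w by (auto intro!: dia_ok simp: word_ok_def)
  have s1: "sm \<one>\<^bsub>K\<^esub> (D x y) = D x y" if "word_ok A x" "word_ok A y" for x y
    using that by (simp add: sm_one dia_ok)
  have "D (\<one>\<^bsub>A\<^esub> # v) (\<one>\<^bsub>A\<^esub> # w) = drec \<one>\<^bsub>A\<^esub> (D v (\<one>\<^bsub>A\<^esub> # w)) (D (\<one>\<^bsub>A\<^esub> # v) w) (D v w)"
    using v w dia_rec[of v w "\<one>\<^bsub>A\<^esub>" "\<one>\<^bsub>A\<^esub>"] by (simp add: word_ok_def)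
  then show ?thesis using v w ok s1 l_in k_in
    by (simp add: W_def q_P q_mult q_add q_smult drec_def mf_one pre_sm word_ok_def sm_one)
qed

definition qlin where
  "qlin f \<longleftrightarrow> (\<forall>S\<in>carrier Q. f S \<in> carrier Q) \<and>
     (\<forall>S\<in>carrier Q. \<forall>T\<in>carrier Q. f (S \<oplus>\<^bsub>Q\<^esub> T) = f S \<oplus>\<^bsub>Q\<^esub> f T) \<and>
     (\<forall>c\<in>carrier K. \<forall>S\<in>carrier Q. f (c \<odot>\<^bsub>Q\<^esub> S) = c \<odot>\<^bsub>Q\<^esub> f S)"

lemma qlinD: "qlin f \<Longrightarrow> S \<in> carrier Q \<Longrightarrow> f S \<in> carrier Q"
  "qlin f \<Longrightarrow> S \<in> carrier Q \<Longrightarrow> T \<in> carrier Q \<Longrightarrow> f (S \<oplus>\<^bsub>Q\<^esub> T) = f S \<oplus>\<^bsub>Q\<^esub> f T"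
  "qlin f \<Longrightarrow> c \<in> carrier K \<Longrightarrow> S \<in> carrier Q \<Longrightarrow> f (c \<odot>\<^bsub>Q\<^esub> S) = c \<odot>\<^bsub>Q\<^esub> f S"
  by (auto simp: qlin_def)

lemma qlin_zero: "qlin f \<Longrightarrow> f \<zero>\<^bsub>Q\<^esub> = \<zero>\<^bsub>Q\<^esub>"
proof -
  assume f: "qlin f"
  have z: "\<zero>\<^bsub>Q\<^esub> \<in> carrier Q" by (rule Qm.zero_closed)
  have "f \<zero>\<^bsub>Q\<^esub> = f (\<zero>\<^bsub>K\<^esub> \<odot>\<^bsub>Q\<^esub> \<zero>\<^bsub>Q\<^esub>)" using Qm.smult_l_null[OF z] by simp
  also have "... = \<zero>\<^bsub>K\<^esub> \<odot>\<^bsub>Q\<^esub> f \<zero>\<^bsub>Q\<^esub>" by (rule qlinD(3)[OF f R.zero_closed z])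
  also have "... = \<zero>\<^bsub>Q\<^esub>" by (rule Qm.smult_l_null[OF qlinD(1)[OF f z]])
  finally show ?thesis .
qed

lemma qlin_ext: assumes f: "qlin f" and g: "qlin g" and fg: "\<And>w. word_ok A w \<Longrightarrow> f (W w) = g (W w)"
  and S: "S \<in> carrier Q" shows "f S = g S"
proof -
  obtain X where X: "fok X" "S = cls X" using S by (rule QE)
  have "f (cls X) = g (cls X)" using X(1)
  proof (induction X)
    case Nil thus ?case using qlin_zero[OF f] qlin_zero[OF g] by (simp add: q_zero)
  next
    case (Cons x X)
    obtain c w where x: "x = (c,w)" by force
    have cw: "c \<in> carrier K" "word_ok A w" "fok X" using Cons.prems x by auto
    have e: "cls (x # X) = c \<odot>\<^bsub>Q\<^esub> W w \<oplus>\<^bsub>Q\<^esub> cls X"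
      using cw x by (simp add: W_smult q_add)
    show ?case using Cons.IH cw fg by (simp add: e qlinD[OF f] qlinD[OF g])
  qed
  thus ?thesis using X by simp
qed

lemma qlin_id: "qlin (\<lambda>S. S)" by (simp add: qlin_def)
lemma qlin_add: "qlin f \<Longrightarrow> qlin g \<Longrightarrow> qlin (\<lambda>S. f S \<oplus>\<^bsub>Q\<^esub> g S)"
  unfolding qlin_def by (auto simp: Qm.a_ac Qm.smult_r_distr)
lemma qlin_smult: "c \<in> carrier K \<Longrightarrow> qlin f \<Longrightarrow> qlin (\<lambda>S. c \<odot>\<^bsub>Q\<^esub> f S)"
  unfolding qlin_def by (auto simp: Qm.smult_r_distr Qm.smult_assoc1[symmetric] R.m_comm)
lemma qlin_Pq: "qlin f \<Longrightarrow> qlin (\<lambda>S. Pq (f S))"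
  unfolding qlin_def by (auto simp: Pq_add Pq_smult)
lemma qlin_Mq: "a \<in> carrier A \<Longrightarrow> qlin f \<Longrightarrow> qlin (\<lambda>S. Mq a (f S))"
  unfolding qlin_def by (auto simp: Mq_add Mq_smult)
lemma qlin_mult_l: "T \<in> carrier Q \<Longrightarrow> qlin f \<Longrightarrow> qlin (\<lambda>S. f S \<otimes>\<^bsub>Q\<^esub> T)"
  unfolding qlin_def by (auto simp: q_l_distr q_smult_l)
lemma qlin_mult_r: "T \<in> carrier Q \<Longrightarrow> qlin f \<Longrightarrow> qlin (\<lambda>S. T \<otimes>\<^bsub>Q\<^esub> f S)"
  unfolding qlin_def by (auto simp: q_r_distr q_smult_r)

lemmas qlin_intros = qlin_id qlin_add qlin_smult qlin_Pq qlin_Mq qlin_mult_l qlin_mult_r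

lemma RB_Q: "S \<in> carrier Q \<Longrightarrow> T \<in> carrier Q \<Longrightarrow>
  Pq S \<otimes>\<^bsub>Q\<^esub> Pq T =
   Pq (S \<otimes>\<^bsub>Q\<^esub> Pq T) \<oplus>\<^bsub>Q\<^esub> Pq (Pq S \<otimes>\<^bsub>Q\<^esub> T)
   \<oplus>\<^bsub>Q\<^esub> l \<odot>\<^bsub>Q\<^esub> Pq (S \<otimes>\<^bsub>Q\<^esub> T) \<oplus>\<^bsub>Q\<^esub> k \<odot>\<^bsub>Q\<^esub> (S \<otimes>\<^bsub>Q\<^esub> T)"
proof -
  assume S: "S \<in> carrier Q" and T: "T \<in> carrier Q"
  have step1: "Pq S' \<otimes>\<^bsub>Q\<^esub> Pq (W w) =
   Pq (S' \<otimes>\<^bsub>Q\<^esub> Pq (W w)) \<oplus>\<^bsub>Q\<^esub> Pq (Pq S' \<otimes>\<^bsub>Q\<^esub> W w)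
   \<oplus>\<^bsub>Q\<^esub> l \<odot>\<^bsub>Q\<^esub> Pq (S' \<otimes>\<^bsub>Q\<^esub> W w) \<oplus>\<^bsub>Q\<^esub> k \<odot>\<^bsub>Q\<^esub> (S' \<otimes>\<^bsub>Q\<^esub> W w)"
    if "S' \<in> carrier Q" "word_ok A w" for S' w
    by (rule qlin_ext[where f = "\<lambda>S. Pq S \<otimes>\<^bsub>Q\<^esub> Pq (W w)"]) 
       (use that l_in k_in in \<open>(intro qlin_intros; simp)+, simp add: RB_words, simp\<close>)
  show ?thesis
    by (rule qlin_ext[where f = "\<lambda>T. Pq S \<otimes>\<^bsub>Q\<^esub> Pq T"])
       (use S T l_in k_in in \<open>(intro qlin_intros; simp)+, simp add: step1, simp\<close>)
qed

end

context sha
begin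

abbreviation qm (infixl "\<star>" 70) where "S \<star> T \<equiv> S \<otimes>\<^bsub>Q\<^esub> T"
abbreviation qa (infixl "\<boxplus>" 65) where "S \<boxplus> T \<equiv> S \<oplus>\<^bsub>Q\<^esub> T"
abbreviation qs (infixr "\<cdot>" 75) where "c \<cdot> S \<equiv> c \<odot>\<^bsub>Q\<^esub> S"

lemma assoc_core:
  assumes X: "X \<in> carrier Q" and Y: "Y \<in> carrier Q" and Z: "Z \<in> carrier Q"
  and i1: "(X \<star> Pq Y) \<star> Pq Z = X \<star> (Pq Y \<star> Pq Z)"
  and i2: "(Pq X \<star> Y) \<star> Pq Z = Pq X \<star> (Y \<star> Pq Z)"
  and i3: "(X \<star> Y) \<star> Pq Z = X \<star> (Y \<star> Pq Z)"
  and i4: "(Pq X \<star> Pq Y) \<star> Z = Pq X \<star> (Pq Y \<star> Z)"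
  and i5: "(X \<star> Y) \<star> Z = X \<star> (Y \<star> Z)"
  and i6: "(X \<star> Pq Y) \<star> Z = X \<star> (Pq Y \<star> Z)"
  and i7: "(Pq X \<star> Y) \<star> Z = Pq X \<star> (Y \<star> Z)"
  shows "(Pq X \<star> Pq Y) \<star> Pq Z = Pq X \<star> (Pq Y \<star> Pq Z)"
proof -
  note l = l_in and kk = k_in
  define \<alpha> where "\<alpha> = (X \<star> Pq Y \<boxplus> Pq X \<star> Y) \<boxplus> l \<cdot> (X \<star> Y)"
  define \<beta> where "\<beta> = (Y \<star> Pq Z \<boxplus> Pq Y \<star> Z) \<boxplus> l \<cdot> (Y \<star> Z)"
  have \<alpha>: "\<alpha> \<in> carrier Q" and \<beta>: "\<beta> \<in> carrier Q" using X Y Z l by (simp_all add: \<alpha>_def \<beta>_def)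
  have eq1: "Pq X \<star> Pq Y = Pq \<alpha> \<boxplus> k \<cdot> (X \<star> Y)"
    using RB_Q[OF X Y] X Y l by (simp add: \<alpha>_def Pq_add Pq_smult)
  have eq2: "Pq Y \<star> Pq Z = Pq \<beta> \<boxplus> k \<cdot> (Y \<star> Z)"
    using RB_Q[OF Y Z] Y Z l by (simp add: \<beta>_def Pq_add Pq_smult)
  define \<gamma> where "\<gamma> = Pq \<alpha> \<star> Z"
  define \<delta> where "\<delta> = X \<star> Pq \<beta>"
  have \<gamma>: "\<gamma> \<in> carrier Q" and \<delta>: "\<delta> \<in> carrier Q" using \<alpha> \<beta> X Z by (simp_all add: \<gamma>_def \<delta>_def)
  have h\<gamma>: "\<gamma> \<boxplus> k \<cdot> ((X \<star> Y) \<star> Z) = (Pq X \<star> Pq Y) \<star> Z"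
    using X Y Z \<alpha> kk by (simp add: eq1 \<gamma>_def q_l_distr q_smult_l)
  have h\<delta>: "\<delta> \<boxplus> k \<cdot> (X \<star> (Y \<star> Z)) = X \<star> (Pq Y \<star> Pq Z)"
    using X Y Z \<beta> kk by (simp add: eq2 \<delta>_def q_r_distr q_smult_r)
  define pL where "pL = \<alpha> \<star> Pq Z \<boxplus> \<gamma> \<boxplus> l \<cdot> (\<alpha> \<star> Z)"
  define pR where "pR = \<delta> \<boxplus> Pq X \<star> \<beta> \<boxplus> l \<cdot> (X \<star> \<beta>)"
  have pL: "pL \<in> carrier Q" and pR: "pR \<in> carrier Q" using X Y Z \<alpha> \<beta> \<gamma> \<delta> l by (simp_all add: pL_def pR_def)
  have t: "k \<cdot> ((X \<star> Y) \<star> Z) \<in> carrier Q" using X Y Z kk by simp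
  have "pL \<boxplus> k \<cdot> ((X \<star> Y) \<star> Z) = \<alpha> \<star> Pq Z \<boxplus> (\<gamma> \<boxplus> k \<cdot> ((X \<star> Y) \<star> Z)) \<boxplus> l \<cdot> (\<alpha> \<star> Z)"
    using X Y Z \<alpha> \<gamma> l kk by (simp add: pL_def Qm.a_ac)
  also have "... = \<alpha> \<star> Pq Z \<boxplus> (Pq X \<star> Pq Y) \<star> Z \<boxplus> l \<cdot> (\<alpha> \<star> Z)" by (simp only: h\<gamma>)
  also have "... = \<delta> \<boxplus> k \<cdot> (X \<star> (Y \<star> Z)) \<boxplus> Pq X \<star> \<beta> \<boxplus> l \<cdot> (X \<star> \<beta>)"
    unfolding h\<delta> \<alpha>_def \<beta>_def using X Y Z l
    by (simp add: q_l_distr q_r_distr q_smult_l q_smult_r Qm.smult_r_distr i1 i2 i3 i4 i5 i6 i7 Qm.a_ac)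
  also have "... = pR \<boxplus> k \<cdot> ((X \<star> Y) \<star> Z)"
    using X Y Z \<beta> \<delta> l kk by (simp add: pR_def i5 Qm.a_ac)
  finally have pLR: "pL = pR" using pL pR t by simp
  have nLR: "k \<cdot> (\<alpha> \<star> Z) \<boxplus> k \<cdot> ((X \<star> Y) \<star> Pq Z) = k \<cdot> (X \<star> \<beta>) \<boxplus> k \<cdot> (Pq X \<star> (Y \<star> Z))"
    unfolding \<alpha>_def \<beta>_def using X Y Z l kk
    by (simp add: q_l_distr q_r_distr q_smult_l q_smult_r Qm.smult_r_distr i1 i2 i3 i4 i5 i6 i7 Qm.a_ac)
  have "(Pq X \<star> Pq Y) \<star> Pq Z = Pq \<alpha> \<star> Pq Z \<boxplus> k \<cdot> ((X \<star> Y) \<star> Pq Z)"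
    using X Y Z \<alpha> kk by (simp add: eq1 q_l_distr q_smult_l)
  also have "Pq \<alpha> \<star> Pq Z = Pq pL \<boxplus> k \<cdot> (\<alpha> \<star> Z)"
    using RB_Q[OF \<alpha> Z] X Y Z \<alpha> \<gamma> l by (simp add: pL_def \<gamma>_def Pq_add Pq_smult)
  finally have L: "(Pq X \<star> Pq Y) \<star> Pq Z = Pq pL \<boxplus> (k \<cdot> (\<alpha> \<star> Z) \<boxplus> k \<cdot> ((X \<star> Y) \<star> Pq Z))"
    using X Y Z \<alpha> pL kk by (simp add: Qm.a_ac)
  have "Pq X \<star> (Pq Y \<star> Pq Z) = Pq X \<star> Pq \<beta> \<boxplus> k \<cdot> (Pq X \<star> (Y \<star> Z))"
    using X Y Z \<beta> kk by (simp add: eq2 q_r_distr q_smult_r)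
  also have "Pq X \<star> Pq \<beta> = Pq pR \<boxplus> k \<cdot> (X \<star> \<beta>)"
    using RB_Q[OF X \<beta>] X Y Z \<beta> \<delta> l by (simp add: pR_def \<delta>_def Pq_add Pq_smult)
  finally have R: "Pq X \<star> (Pq Y \<star> Pq Z) = Pq pR \<boxplus> (k \<cdot> (X \<star> \<beta>) \<boxplus> k \<cdot> (Pq X \<star> (Y \<star> Z)))"
    using X Y Z \<beta> pR kk by (simp add: Qm.a_ac)
  show ?thesis using L R pLR nLR by simp
qed

lemma Pq_W: "word_ok A x \<Longrightarrow> Pq (W x) = W (\<one>\<^bsub>A\<^esub> # x)"
  by (simp add: W_def q_P)

lemma word_ok_len1: "word_ok A x \<Longrightarrow> length x = 1 \<Longrightarrow> \<exists>a. a \<in> carrier A \<and> x = [a]"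
  by (cases x) (auto simp: word_ok_def)

lemma word_ok_len2: "word_ok A x \<Longrightarrow> length x \<noteq> 1 \<Longrightarrow> \<exists>a x'. a \<in> carrier A \<and> word_ok A x' \<and> x = a # x'"
  by (cases x) (auto simp: word_ok_def)

lemma assoc_words: "word_ok A x \<Longrightarrow> word_ok A y \<Longrightarrow> word_ok A z \<Longrightarrow> (W x \<star> W y) \<star> W z = W x \<star> (W y \<star> W z)"
proof (induction "length x + length y + length z" arbitrary: x y z rule: less_induct)
  case less
  note wx = less.prems(1) and wy = less.prems(2) and wz = less.prems(3)
  have cx: "W x \<in> carrier Q" "W y \<in> carrier Q" "W z \<in> carrier Q" using less.prems by auto
  show ?case
  proof (cases "length x = 1")
    case True
    then obtain a where a: "a \<in> carrier A" "x = [a]" using word_ok_len1[OF wx] by blast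
    thus ?thesis using cx by (simp add: W1_mult Mq_mult_l)
  next
    case x2: False
    show ?thesis
    proof (cases "length y = 1")
      case True
      then obtain b where b: "b \<in> carrier A" "y = [b]" using word_ok_len1[OF wy] by blast
      have "(W x \<star> W y) \<star> W z = (W y \<star> W x) \<star> W z" using cx by (simp add: q_comm)
      also have "... = Mq b (W x \<star> W z)" using cx b by (simp add: W1_mult Mq_mult_l)
      also have "... = W x \<star> (W y \<star> W z)" using cx b by (simp add: W1_mult Mq_mult_r)
      finally show ?thesis .
    next
      case y2: False
      show ?thesis
      proof (cases "length z = 1")
        case True
        then obtain c where c: "c \<in> carrier A" "z = [c]" using word_ok_len1[OF wz] by blast
        have "(W x \<star> W y) \<star> W z = W z \<star> (W x \<star> W y)" using cx by (simp add: q_comm)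
        also have "... = Mq c (W x \<star> W y)" using cx c by (simp add: W1_mult)
        also have "... = W x \<star> (W z \<star> W y)" using cx c by (simp add: W1_mult Mq_mult_r)
        also have "... = W x \<star> (W y \<star> W z)" using cx by (simp add: q_comm[of "W z"])
        finally show ?thesis .
      next
        case z2: False
        obtain a x' where a: "a \<in> carrier A" "word_ok A x'" "x = a # x'" using word_ok_len2[OF wx x2] by blast
        obtain b y' where b: "b \<in> carrier A" "word_ok A y'" "y = b # y'" using word_ok_len2[OF wy y2] by blast
        obtain c z' where c: "c \<in> carrier A" "word_ok A z'" "z = c # z'" using word_ok_len2[OF wz z2] by blast
        have o: "word_ok A (\<one>\<^bsub>A\<^esub> # x')" "word_ok A (\<one>\<^bsub>A\<^esub> # y')" "word_ok A (\<one>\<^bsub>A\<^esub> # z')"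
          using a b c by (auto simp: word_ok_def)
        have C: "W x' \<in> carrier Q" "W y' \<in> carrier Q" "W z' \<in> carrier Q" using a b c by auto
        have IH: "(W p \<star> W q) \<star> W r = W p \<star> (W q \<star> W r)"
          if "p \<in> {x', \<one>\<^bsub>A\<^esub> # x'}" "q \<in> {y', \<one>\<^bsub>A\<^esub> # y'}" "r \<in> {z', \<one>\<^bsub>A\<^esub> # z'}"
             "length p + length q + length r < length x + length y + length z" for p q r
          using that a b c o by (intro less.hyps) auto
        have core: "(Pq (W x') \<star> Pq (W y')) \<star> Pq (W z') = Pq (W x') \<star> (Pq (W y') \<star> Pq (W z'))"
        proof -
          have pw: "Pq (W x') = W (\<one>\<^bsub>A\<^esub> # x')" "Pq (W y') = W (\<one>\<^bsub>A\<^esub> # y')" "Pq (W z') = W (\<one>\<^bsub>A\<^esub> # z')"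
            using a b c by (simp_all add: Pq_W)
          show ?thesis by (rule assoc_core[OF C], unfold pw, (rule IH; simp add: a b c)+)
        qed
        have ex: "W x = Mq a (Pq (W x'))" "W y = Mq b (Pq (W y'))" "W z = Mq c (Pq (W z'))"
          using a b c by (simp_all add: W_cons)
        show ?thesis unfolding ex using C a(1,2) b(1,2) c(1,2) core by (simp add: Mq_mult_l Mq_mult_r)
      qed
    qed
  qed
qed

lemma q_assoc: "S \<in> carrier Q \<Longrightarrow> T \<in> carrier Q \<Longrightarrow> U \<in> carrier Q \<Longrightarrow> (S \<star> T) \<star> U = S \<star> (T \<star> U)"
proof -
  assume S: "S \<in> carrier Q" and T: "T \<in> carrier Q" and U: "U \<in> carrier Q"
  have s1: "(S' \<star> W y) \<star> W z = S' \<star> (W y \<star> W z)" if "S' \<in> carrier Q" "word_ok A y" "word_ok A z" for S' y z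
    by (rule qlin_ext[where f = "\<lambda>S. (S \<star> W y) \<star> W z"])
       (use that in \<open>(intro qlin_intros; simp)+, simp add: assoc_words, simp\<close>)
  have s2: "(S \<star> T') \<star> W z = S \<star> (T' \<star> W z)" if "T' \<in> carrier Q" "word_ok A z" for T' z
    by (rule qlin_ext[where f = "\<lambda>T. (S \<star> T) \<star> W z"])
       (use that S in \<open>(intro qlin_intros; simp)+, simp add: s1, simp\<close>)
  show ?thesis
    by (rule qlin_ext[where f = "\<lambda>U. (S \<star> T) \<star> U"])
       (use S T U in \<open>(intro qlin_intros; simp)+, simp add: s2, simp\<close>)
qed

lemma W1_one: "W [\<one>\<^bsub>A\<^esub>] = \<one>\<^bsub>Q\<^esub>" by (simp add: W_def q_one)

lemma Q_cring: "cring Q"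
proof (rule cringI)
  show "abelian_group Q" by (rule Q_abelian_group)
  show "comm_monoid Q"
  proof (rule comm_monoidI)
    show "\<one>\<^bsub>Q\<^esub> \<in> carrier Q" by (simp add: q_one)
  next
    fix S assume "S \<in> carrier Q"
    thus "\<one>\<^bsub>Q\<^esub> \<star> S = S" using W1_mult[of "\<one>\<^bsub>A\<^esub>" S] by (simp add: W1_one Mq_one)
  next
    fix S T assume "S \<in> carrier Q" "T \<in> carrier Q"
    thus "S \<star> T \<in> carrier Q" by simp
  next
    fix S T U assume "S \<in> carrier Q" "T \<in> carrier Q" "U \<in> carrier Q"
    thus "S \<star> T \<star> U = S \<star> (T \<star> U)" by (rule q_assoc)
  next
    fix S T assume "S \<in> carrier Q" "T \<in> carrier Q"
    thus "S \<star> T = T \<star> S" by (rule q_comm)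
  qed
qed (simp add: q_l_distr)

lemma Q_algebra: "algebra K Q"
  by (rule algebraI) (auto simp: Q_cring Qm.smult_l_distr Qm.smult_r_distr Qm.smult_assoc1 q_smult_l intro: R.is_cring)

lemma P_ext_RB: "ext_RB_operator K Q l k (P_e K A)"
  unfolding ext_RB_operator_def by (auto simp: Pq_add Pq_smult RB_Q)

lemma Mq_W1: "a \<in> carrier A \<Longrightarrow> b \<in> carrier A \<Longrightarrow> Mq a (W [b]) = W [a \<otimes>\<^bsub>A\<^esub> b]"
  by (simp add: W_def q_Mq)

lemma jA_W: "j_A K A a = W [a]" by (simp add: j_A_def W_def)

lemma jA_hom: "j_A K A \<in> alg_hom K A Q"
proof -
  have add: "W [a \<oplus>\<^bsub>A\<^esub> b] = W [a] \<boxplus> W [b]" if "a \<in> carrier A" "b \<in> carrier A" for a b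
  proof -
    have "[(\<one>\<^bsub>K\<^esub>, [] @ (a \<oplus>\<^bsub>A\<^esub> b) # [])] \<approx> [(\<one>\<^bsub>K\<^esub>, [] @ a # []), (\<one>\<^bsub>K\<^esub>, [] @ b # [])]"
      by (rule teq.lin_add) (use that in auto)
    thus ?thesis using that by (simp add: W_def q_add cls_eqI)
  qed
  have sm: "W [c \<odot>\<^bsub>A\<^esub> a] = c \<cdot> W [a]" if "c \<in> carrier K" "a \<in> carrier A" for c a
  proof -
    have "[(\<one>\<^bsub>K\<^esub>, [] @ (c \<odot>\<^bsub>A\<^esub> a) # [])] \<approx> [(\<one>\<^bsub>K\<^esub> \<otimes>\<^bsub>K\<^esub> c, [] @ a # [])]"
      by (rule teq.lin_smult) (use that in auto)
    thus ?thesis using that by (simp add: W_def q_smult cls_eqI)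
  qed
  show ?thesis unfolding alg_hom_def
    by (auto simp: jA_W ring_hom_def W1_mult Mq_W1 add sm W1_one)
qed

end

locale shaU = sha K A l k + Rm: algebra K R
  for K :: "'k ring" and A :: "('k,'a) module" and l k :: 'k and R :: "('k,'r) module" +
  fixes P :: "'r \<Rightarrow> 'r" and f :: "'a \<Rightarrow> 'r"
  assumes P_op: "ext_RB_operator K R l k P" and f_hom: "f \<in> alg_hom K A R"
begin

lemma P_closed[simp]: "x \<in> carrier R \<Longrightarrow> P x \<in> carrier R"
  using P_op unfolding ext_RB_operator_def by auto
lemma P_add: "x \<in> carrier R \<Longrightarrow> y \<in> carrier R \<Longrightarrow> P (x \<oplus>\<^bsub>R\<^esub> y) = P x \<oplus>\<^bsub>R\<^esub> P y"
  using P_op unfolding ext_RB_operator_def by auto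
lemma P_smult: "c \<in> carrier K \<Longrightarrow> x \<in> carrier R \<Longrightarrow> P (c \<odot>\<^bsub>R\<^esub> x) = c \<odot>\<^bsub>R\<^esub> P x"
  using P_op unfolding ext_RB_operator_def by auto
lemma P_RB: "x \<in> carrier R \<Longrightarrow> y \<in> carrier R \<Longrightarrow>
  P x \<otimes>\<^bsub>R\<^esub> P y = P (x \<otimes>\<^bsub>R\<^esub> P y) \<oplus>\<^bsub>R\<^esub> P (P x \<otimes>\<^bsub>R\<^esub> y)
          \<oplus>\<^bsub>R\<^esub> l \<odot>\<^bsub>R\<^esub> P (x \<otimes>\<^bsub>R\<^esub> y) \<oplus>\<^bsub>R\<^esub> k \<odot>\<^bsub>R\<^esub> (x \<otimes>\<^bsub>R\<^esub> y)"
  using P_op unfolding ext_RB_operator_def by auto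
lemma P_zero: "P \<zero>\<^bsub>R\<^esub> = \<zero>\<^bsub>R\<^esub>"
proof -
  have "P \<zero>\<^bsub>R\<^esub> = P (\<zero>\<^bsub>K\<^esub> \<odot>\<^bsub>R\<^esub> \<zero>\<^bsub>R\<^esub>)" by simp
  also have "... = \<zero>\<^bsub>K\<^esub> \<odot>\<^bsub>R\<^esub> P \<zero>\<^bsub>R\<^esub>" by (rule P_smult) auto
  also have "... = \<zero>\<^bsub>R\<^esub>" by simp
  finally show ?thesis .
qed

lemma f_ring_hom: "f \<in> ring_hom A R" using f_hom by (simp add: alg_hom_def)
lemma f_closed[simp]: "a \<in> carrier A \<Longrightarrow> f a \<in> carrier R" using f_ring_hom by (rule ring_hom_closed)
lemma f_mult: "a \<in> carrier A \<Longrightarrow> b \<in> carrier A \<Longrightarrow> f (a \<otimes>\<^bsub>A\<^esub> b) = f a \<otimes>\<^bsub>R\<^esub> f b"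
  using f_ring_hom by (simp add: ring_hom_mult)
lemma f_add: "a \<in> carrier A \<Longrightarrow> b \<in> carrier A \<Longrightarrow> f (a \<oplus>\<^bsub>A\<^esub> b) = f a \<oplus>\<^bsub>R\<^esub> f b"
  using f_ring_hom by (simp add: ring_hom_add)
lemma f_one: "f \<one>\<^bsub>A\<^esub> = \<one>\<^bsub>R\<^esub>" using f_ring_hom by (simp add: ring_hom_one)
lemma f_smult: "c \<in> carrier K \<Longrightarrow> a \<in> carrier A \<Longrightarrow> f (c \<odot>\<^bsub>A\<^esub> a) = c \<odot>\<^bsub>R\<^esub> f a"
  using f_hom by (simp add: alg_hom_def)

lemma smult_r_R: "c \<in> carrier K \<Longrightarrow> x \<in> carrier R \<Longrightarrow> y \<in> carrier R \<Longrightarrow>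
   x \<otimes>\<^bsub>R\<^esub> (c \<odot>\<^bsub>R\<^esub> y) = c \<odot>\<^bsub>R\<^esub> (x \<otimes>\<^bsub>R\<^esub> y)"
  by (metis Rm.m_comm Rm.smult_assoc2 Rm.smult_closed)

fun psi :: "'a list \<Rightarrow> 'r" where
  "psi [] = \<zero>\<^bsub>R\<^esub>"
| "psi [a] = f a"
| "psi (a # b # w) = f a \<otimes>\<^bsub>R\<^esub> P (psi (b # w))"

lemma psi_closed[simp]: "set w \<subseteq> carrier A \<Longrightarrow> psi w \<in> carrier R"
  by (induction w rule: psi.induct) auto

lemma psi_cons: "w \<noteq> [] \<Longrightarrow> psi (a # w) = f a \<otimes>\<^bsub>R\<^esub> P (psi w)"
  by (cases w) auto

lemma psi_lin_add: "set u \<subseteq> carrier A \<Longrightarrow> set v \<subseteq> carrier A \<Longrightarrow> a \<in> carrier A \<Longrightarrow> b \<in> carrier A \<Longrightarrow>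
   psi (u @ (a \<oplus>\<^bsub>A\<^esub> b) # v) = psi (u @ a # v) \<oplus>\<^bsub>R\<^esub> psi (u @ b # v)"
proof (induction u)
  case Nil thus ?case
    by (cases "v = []") (auto simp: psi_cons f_add Rm.l_distr)
next
  case (Cons u0 u)
  thus ?case by (simp add: psi_cons P_add Rm.r_distr)
qed

lemma psi_lin_smult: "set u \<subseteq> carrier A \<Longrightarrow> set v \<subseteq> carrier A \<Longrightarrow> a \<in> carrier A \<Longrightarrow> d \<in> carrier K \<Longrightarrow>
   psi (u @ (d \<odot>\<^bsub>A\<^esub> a) # v) = d \<odot>\<^bsub>R\<^esub> psi (u @ a # v)"
proof (induction u)
  case Nil thus ?case
    by (cases "v = []") (auto simp: psi_cons f_smult Rm.smult_assoc2)
next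
  case (Cons u0 u)
  thus ?case by (simp add: psi_cons P_smult smult_r_R)
qed

definition Phi :: "('k \<times> 'a list) list \<Rightarrow> 'r" where
  "Phi X = foldr (\<lambda>(c,w) acc. c \<odot>\<^bsub>R\<^esub> psi w \<oplus>\<^bsub>R\<^esub> acc) X \<zero>\<^bsub>R\<^esub>"

lemma Phi_Nil[simp]: "Phi [] = \<zero>\<^bsub>R\<^esub>" by (simp add: Phi_def)
lemma Phi_Cons[simp]: "Phi ((c,w) # X) = c \<odot>\<^bsub>R\<^esub> psi w \<oplus>\<^bsub>R\<^esub> Phi X" by (simp add: Phi_def)
lemma Phi_closed[simp]: "fok X \<Longrightarrow> Phi X \<in> carrier R"
  by (induction X) (auto simp: word_ok_def)
lemma Phi_append[simp]: "fok X \<Longrightarrow> fok Y \<Longrightarrow> Phi (X @ Y) = Phi X \<oplus>\<^bsub>R\<^esub> Phi Y"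
  by (induction X) (auto simp: word_ok_def Rm.a_ac)
lemma Phi_sm: "e \<in> carrier K \<Longrightarrow> fok X \<Longrightarrow> Phi (sm e X) = e \<odot>\<^bsub>R\<^esub> Phi X"
  by (induction X) (auto simp: word_ok_def Rm.smult_r_distr Rm.smult_assoc1)
lemma Phi_concat: "(\<forall>X\<in>set Xs. fok X) \<Longrightarrow> Phi (concat Xs) = foldr (\<lambda>X acc. Phi X \<oplus>\<^bsub>R\<^esub> acc) Xs \<zero>\<^bsub>R\<^esub>"
  by (induction Xs) auto

lemma Phi_teq: "X \<approx> Y \<Longrightarrow> Phi X = Phi Y"
proof (induction rule: teq.induct)
  case (app X X' Y) thus ?case using teq_ok[OF app.hyps(1)] by simp
next
  case (comm X Y) thus ?case by (simp add: Rm.a_comm)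
next
  case (scal X Y e) thus ?case using teq_ok[OF scal.hyps(1)] by (simp add: Phi_sm)
next
  case (coeff_add c d w) thus ?case by (simp add: word_ok_def Rm.smult_l_distr Rm.a_ac)
next
  case (coeff_zero w) thus ?case by (simp add: word_ok_def)
next
  case (lin_add c u v a b) thus ?case by (simp add: psi_lin_add Rm.smult_r_distr Rm.a_ac)
next
  case (lin_smult c d u v a) thus ?case by (simp add: psi_lin_smult Rm.smult_assoc1)
qed auto

lemma Phi_pre: "c \<in> carrier A \<Longrightarrow> fok X \<Longrightarrow> Phi (fs_pre c X) = f c \<otimes>\<^bsub>R\<^esub> P (Phi X)"
proof (induction X)
  case Nil thus ?case by (simp add: P_zero)
next
  case (Cons x X)
  obtain d w where x: "x = (d,w)" by force
  have dw: "d \<in> carrier K" "w \<noteq> []" "set w \<subseteq> carrier A" "fok X" using Cons.prems x by (auto simp: word_ok_def)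
  thus ?case using Cons x by (simp add: psi_cons P_add P_smult Rm.r_distr smult_r_R)
qed

lemma Phi_mf: "c \<in> carrier A \<Longrightarrow> fok X \<Longrightarrow> Phi (mf c X) = f c \<otimes>\<^bsub>R\<^esub> Phi X"
proof (induction X)
  case Nil thus ?case by simp
next
  case (Cons x X)
  obtain d w where x: "x = (d,w)" by force
  then obtain w0 w' where w: "w = w0 # w'" using Cons.prems by (cases w) (auto simp: word_ok_def)
  have dw: "d \<in> carrier K" "w0 \<in> carrier A" "set w' \<subseteq> carrier A" "fok X" using Cons.prems x w by auto
  have "psi ((c \<otimes>\<^bsub>A\<^esub> w0) # w') = f c \<otimes>\<^bsub>R\<^esub> psi (w0 # w')"
    using dw Cons.prems by (cases "w' = []") (auto simp: psi_cons f_mult Rm.m_assoc)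
  thus ?case using Cons x w dw by (simp add: Rm.r_distr smult_r_R)
qed

lemma Phi_dia: "word_ok A v \<Longrightarrow> word_ok A w \<Longrightarrow> Phi (D v w) = psi v \<otimes>\<^bsub>R\<^esub> psi w"
proof (induction v w rule: dia_ind)
  case (1 ys) thus ?case by (simp add: word_ok_def)
next
  case (2 v va) thus ?case by (simp add: word_ok_def)
next
  case (3 a b) thus ?case by (simp add: f_mult)
next
  case (4 a b b1 bs) thus ?case by (simp add: f_mult Rm.m_assoc)
next
  case (5 a a1 as b) thus ?case by (simp add: f_mult Rm.m_assoc Rm.m_comm Rm.m_lcomm)
next
  case (6 a a1 as b b1 bs)
  let ?x = "psi (a1 # as)" and ?y = "psi (b1 # bs)"
  have ok: "word_ok A (a1 # as)" "word_ok A (b1 # bs)" "word_ok A (\<one>\<^bsub>A\<^esub> # a1 # as)" "word_ok A (\<one>\<^bsub>A\<^esub> # b1 # bs)"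
    "a \<in> carrier A" "b \<in> carrier A" using 6 by auto
  have xy: "?x \<in> carrier R" "?y \<in> carrier R" using ok by auto
  have p1: "psi (\<one>\<^bsub>A\<^esub> # b1 # bs) = P ?y" "psi (\<one>\<^bsub>A\<^esub> # a1 # as) = P ?x"
    using xy by (auto simp: f_one)
  have IH: "Phi (D (a1 # as) (\<one>\<^bsub>A\<^esub> # b1 # bs)) = ?x \<otimes>\<^bsub>R\<^esub> P ?y"
           "Phi (D (\<one>\<^bsub>A\<^esub> # a1 # as) (b1 # bs)) = P ?x \<otimes>\<^bsub>R\<^esub> ?y"
           "Phi (D (a1 # as) (b1 # bs)) = ?x \<otimes>\<^bsub>R\<^esub> ?y"
    using 6 ok p1 by auto
  have okD: "fok (D (a1 # as) (\<one>\<^bsub>A\<^esub> # b1 # bs))" "fok (D (\<one>\<^bsub>A\<^esub> # a1 # as) (b1 # bs))" "fok (D (a1 # as) (b1 # bs))"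
    using ok by (auto intro!: dia_ok)
  have "Phi (D (a # a1 # as) (b # b1 # bs)) =
     f (a \<otimes>\<^bsub>A\<^esub> b) \<otimes>\<^bsub>R\<^esub> P (?x \<otimes>\<^bsub>R\<^esub> P ?y) \<oplus>\<^bsub>R\<^esub> (f (a \<otimes>\<^bsub>A\<^esub> b) \<otimes>\<^bsub>R\<^esub> P (P ?x \<otimes>\<^bsub>R\<^esub> ?y) \<oplus>\<^bsub>R\<^esub>
      (f (a \<otimes>\<^bsub>A\<^esub> b) \<otimes>\<^bsub>R\<^esub> P (l \<odot>\<^bsub>R\<^esub> (?x \<otimes>\<^bsub>R\<^esub> ?y))
     \<oplus>\<^bsub>R\<^esub> k \<odot>\<^bsub>R\<^esub> (f (a \<otimes>\<^bsub>A\<^esub> b) \<otimes>\<^bsub>R\<^esub> (?x \<otimes>\<^bsub>R\<^esub> ?y))))"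
    using okD ok l_in k_in
    by (simp add: drec_def Phi_pre Phi_mf Phi_sm IH del: dia.simps psi.simps(3) add: dia_rec)
  also have "... = (f a \<otimes>\<^bsub>R\<^esub> f b) \<otimes>\<^bsub>R\<^esub> (P ?x \<otimes>\<^bsub>R\<^esub> P ?y)"
    using xy ok l_in k_in
    by (simp add: P_RB f_mult P_add P_smult Rm.r_distr smult_r_R Rm.a_ac)
  also have "... = psi (a # a1 # as) \<otimes>\<^bsub>R\<^esub> psi (b # b1 # bs)"
    using xy ok by (simp add: Rm.m_ac)
  finally show ?case .
qed

lemma Phi_fm: "fok X \<Longrightarrow> fok Y \<Longrightarrow> Phi (FM X Y) = Phi X \<otimes>\<^bsub>R\<^esub> Phi Y"
proof (induction X)
  case Nil thus ?case by simp
next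
  case (Cons x X)
  obtain c v where x: "x = (c,v)" by force
  have cv: "c \<in> carrier K" "word_ok A v" "fok X" using Cons.prems x by auto
  have "Phi (row c v Y) = c \<odot>\<^bsub>R\<^esub> (psi v \<otimes>\<^bsub>R\<^esub> Phi Y)"
    using Cons.prems(2)
  proof (induction Y)
    case Nil thus ?case using cv by (simp add: word_okD)
  next
    case (Cons y Y)
    obtain d w where y: "y = (d,w)" by force
    have dw: "d \<in> carrier K" "word_ok A w" "fok Y" using Cons.prems y by auto
    have pv: "psi v \<in> carrier R" "psi w \<in> carrier R" using cv dw by (auto simp: word_ok_def)
    show ?case using Cons.IH dw y cv pv
      by (simp add: dia_ok Phi_sm Phi_dia Rm.r_distr smult_r_R Rm.smult_r_distr Rm.smult_assoc1)
  qed
  thus ?case using Cons x cv by (simp add: Rm.l_distr Rm.smult_assoc2 word_ok_def)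
qed

definition g :: "('k \<times> 'a list) list set \<Rightarrow> 'r" where "g S = Phi (trep S)"

lemma g_cls: "fok X \<Longrightarrow> g (cls X) = Phi X"
  unfolding g_def by (rule Phi_teq, rule trep_cls)

lemma g_hom: "g \<in> ext_RB_hom K Q (P_e K A) R P"
  unfolding ext_RB_hom_def alg_hom_def ring_hom_def
  by (auto elim!: QE simp: g_cls q_mult q_add q_smult q_one q_P Phi_fm Phi_sm Phi_pre f_one)

lemma g_jA: "a \<in> carrier A \<Longrightarrow> g (j_A K A a) = f a"
  by (simp add: j_A_def g_cls)

lemma g_unique: assumes h: "h \<in> ext_RB_hom K Q (P_e K A) R P" and hj: "\<forall>a\<in>carrier A. h (j_A K A a) = f a"
  and S: "S \<in> carrier Q" shows "h S = g S"
proof -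
  have hr: "h \<in> ring_hom Q R" and hs: "\<And>c S. c \<in> carrier K \<Longrightarrow> S \<in> carrier Q \<Longrightarrow> h (c \<cdot> S) = c \<odot>\<^bsub>R\<^esub> h S"
    and hP: "\<And>S. S \<in> carrier Q \<Longrightarrow> h (Pq S) = P (h S)"
    using h by (auto simp: ext_RB_hom_def alg_hom_def)
  have hW: "h (W w) = psi w" if "word_ok A w" for w
    using that
  proof (induction w rule: psi.induct)
    case 1 thus ?case by (simp add: word_ok_def)
  next
    case (2 a) thus ?case using hj by (simp add: jA_W)
  next
    case (3 a b w)
    have wo: "word_ok A (b # w)" "a \<in> carrier A" using 3 by auto
    have "W (a # b # w) = W [a] \<star> Pq (W (b # w))" using wo by (simp add: W_cons W1_mult)
    hence "h (W (a # b # w)) = h (W [a]) \<otimes>\<^bsub>R\<^esub> h (Pq (W (b # w)))"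
      using wo hr by (simp add: ring_hom_mult)
    thus ?case using wo 3 hj hP by (simp add: jA_W)
  qed
  obtain X where X: "fok X" "S = cls X" using S by (rule QE)
  have "h (cls X) = Phi X" using X(1)
  proof (induction X)
    case Nil
    have "h \<zero>\<^bsub>Q\<^esub> = \<zero>\<^bsub>R\<^esub>" by (rule ring_hom_zero[OF hr]) (simp_all add: Q_cring cring.axioms(1) Rm.M_cring)
    thus ?case by (simp add: q_zero)
  next
    case (Cons x X)
    obtain c w where x: "x = (c,w)" by force
    have cw: "c \<in> carrier K" "word_ok A w" "fok X" using Cons.prems x by auto
    have e: "cls ((c,w) # X) = c \<cdot> W w \<boxplus> cls X" using cw by (simp add: W_smult q_add)
    show ?case using Cons.IH cw hr hs hW x by (simp add: e ring_hom_add)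
  qed
  thus ?thesis using X g_cls by simp
qed

end


theorem theorem3p3:
  fixes K :: "'k ring" and A :: "('k,'a) module" and l k :: 'k
  assumes "cring K" and "algebra K A" and "l \<in> carrier K" and "k \<in> carrier K"
  shows "comm_ext_RB_algebra K (Sha_e K A l k) l k (P_e K A)
    \<and> j_A K A \<in> alg_hom K A (Sha_e K A l k)
    \<and> (\<forall>(R :: ('k,'r) module) P f.
         comm_ext_RB_algebra K R l k P \<longrightarrow> f \<in> alg_hom K A R \<longrightarrow>
         (\<exists>g \<in> ext_RB_hom K (Sha_e K A l k) (P_e K A) R P.
            (\<forall>a\<in>carrier A. g (j_A K A a) = f a) \<and>
            (\<forall>h \<in> ext_RB_hom K (Sha_e K A l k) (P_e K A) R P.
               (\<forall>a\<in>carrier A. h (j_A K A a) = f a) \<longrightarrow>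
               (\<forall>x\<in>carrier (Sha_e K A l k). h x = g x))))"
proof -
  interpret S: sha K A l k using assms by (simp add: sha_def sha_axioms_def)
  have p1: "comm_ext_RB_algebra K (Sha_e K A l k) l k (P_e K A)"
    by (simp add: comm_ext_RB_algebra_def S.Q_algebra S.P_ext_RB)
  have p3: "\<forall>(R :: ('k,'r) module) P f.
         comm_ext_RB_algebra K R l k P \<longrightarrow> f \<in> alg_hom K A R \<longrightarrow>
         (\<exists>g \<in> ext_RB_hom K (Sha_e K A l k) (P_e K A) R P.
            (\<forall>a\<in>carrier A. g (j_A K A a) = f a) \<and>
            (\<forall>h \<in> ext_RB_hom K (Sha_e K A l k) (P_e K A) R P.
               (\<forall>a\<in>carrier A. h (j_A K A a) = f a) \<longrightarrow>
               (\<forall>x\<in>carrier (Sha_e K A l k). h x = g x)))"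
  proof (intro allI impI)
    fix R :: "('k,'r) module" and P f
    assume R: "comm_ext_RB_algebra K R l k P" and f: "f \<in> alg_hom K A R"
    interpret U: shaU K A l k R P f
      using R f assms by (simp add: shaU_def shaU_axioms_def sha_def sha_axioms_def comm_ext_RB_algebra_def)
    show "\<exists>g \<in> ext_RB_hom K (Sha_e K A l k) (P_e K A) R P.
            (\<forall>a\<in>carrier A. g (j_A K A a) = f a) \<and>
            (\<forall>h \<in> ext_RB_hom K (Sha_e K A l k) (P_e K A) R P.
               (\<forall>a\<in>carrier A. h (j_A K A a) = f a) \<longrightarrow>
               (\<forall>x\<in>carrier (Sha_e K A l k). h x = g x))"
      using U.g_hom U.g_jA U.g_unique by blast
  qed
  show ?thesis using p1 S.jA_hom p3 by blast
qed


end
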